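(* Let $K$ be a field of characteristic zero, $g\ge 3$ and $c\ge 3$. Then $\alpha(M_{g,c})=\dim M_{g,c}-g$.
   Context: Lower central series: $\mathfrak{h}^1=\mathfrak{h}$, $\mathfrak{h}^{k+1}=[\mathfrak{h},\mathfrak{h}^k]$. $F_g$ is the free Lie algebra over $K$ on $g$ generators, $F_{g,c}=F_g/F_g^{c+1}$, and $M_{g,c}:=F_{g,c}/[F_{g,c}^2,F_{g,c}^2]$. $\alpha(\mathfrak{h})$ is the maximal dimension of an abelian subalgebra of $\mathfrak{h}$. *)

theory Defs
  imports Main "HOL-Library.Extended_Nat"
begin

record ('a, 'k) lie_alg =
  la_carrier :: "'a set"
  la_add :: "'a \<Rightarrow> 'a \<Rightarrow> 'a"
  la_zero :: 'a
  la_smult :: "'k \<Rightarrow> 'a \<Rightarrow> 'a"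
  la_brk :: "'a \<Rightarrow> 'a \<Rightarrow> 'a"

definition lsubspace :: "('a, 'k) lie_alg \<Rightarrow> 'a set \<Rightarrow> bool" where
  "lsubspace L S \<longleftrightarrow> S \<subseteq> la_carrier L \<and> la_zero L \<in> S
     \<and> (\<forall>x\<in>S. \<forall>y\<in>S. la_add L x y \<in> S) \<and> (\<forall>a x. x \<in> S \<longrightarrow> la_smult L a x \<in> S)"

definition lspan :: "('a, 'k) lie_alg \<Rightarrow> 'a set \<Rightarrow> 'a set" where
  "lspan L X = \<Inter>{S. lsubspace L S \<and> X \<subseteq> S}"

definition brset :: "('a, 'k) lie_alg \<Rightarrow> 'a set \<Rightarrow> 'a set \<Rightarrow> 'a set" where
  "brset L A B = lspan L {la_brk L a b | a b. a \<in> A \<and> b \<in> B}"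

text \<open>Lower central series: lcs L 1 = L, lcs L (k+1) = [L, lcs L k] (k >= 1); lcs L 0 is junk (= L).\<close>
fun lcs :: "('a, 'k) lie_alg \<Rightarrow> nat \<Rightarrow> 'a set" where
  "lcs L 0 = la_carrier L"
| "lcs L (Suc n) = (if n = 0 then la_carrier L else brset L (la_carrier L) (lcs L n))"

definition lideal :: "('a, 'k) lie_alg \<Rightarrow> 'a set \<Rightarrow> bool" where
  "lideal L I \<longleftrightarrow> lsubspace L I \<and>
     (\<forall>x\<in>la_carrier L. \<forall>y\<in>I. la_brk L x y \<in> I \<and> la_brk L y x \<in> I)"

definition ideal_gen :: "('a, 'k) lie_alg \<Rightarrow> 'a set \<Rightarrow> 'a set" where
  "ideal_gen L X = \<Inter>{I. lideal L I \<and> X \<subseteq> I}"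

definition coset :: "('a, 'k) lie_alg \<Rightarrow> 'a set \<Rightarrow> 'a \<Rightarrow> 'a set" where
  "coset L I x = {y. \<exists>i\<in>I. y = la_add L x i}"

definition rep :: "'a set \<Rightarrow> 'a" where
  "rep C = (SOME x. x \<in> C)"

definition quot :: "('a, 'k) lie_alg \<Rightarrow> 'a set \<Rightarrow> ('a set, 'k) lie_alg" where
  "quot L I = \<lparr> la_carrier = coset L I ` la_carrier L,
      la_add = (\<lambda>C D. coset L I (la_add L (rep C) (rep D))),
      la_zero = coset L I (la_zero L),
      la_smult = (\<lambda>a C. coset L I (la_smult L a (rep C))),
      la_brk = (\<lambda>C D. coset L I (la_brk L (rep C) (rep D))) \<rparr>"

definition lincomb :: "('a, 'k) lie_alg \<Rightarrow> ('a \<Rightarrow> 'k) \<Rightarrow> 'a list \<Rightarrow> 'a" where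
  "lincomb L c xs = foldr (\<lambda>x acc. la_add L (la_smult L (c x) x) acc) xs (la_zero L)"

definition lin_indep :: "('a, 'k::zero) lie_alg \<Rightarrow> 'a list \<Rightarrow> bool" where
  "lin_indep L xs \<longleftrightarrow> distinct xs \<and> set xs \<subseteq> la_carrier L \<and>
     (\<forall>c. lincomb L c xs = la_zero L \<longrightarrow> (\<forall>x\<in>set xs. c x = 0))"

definition ldim :: "('a, 'k::zero) lie_alg \<Rightarrow> 'a set \<Rightarrow> enat" where
  "ldim L S = Sup {enat (length xs) | xs. lin_indep L xs \<and> set xs \<subseteq> S}"

definition abelian_subalg :: "('a, 'k) lie_alg \<Rightarrow> 'a set \<Rightarrow> bool" where
  "abelian_subalg L S \<longleftrightarrow> lsubspace L S \<and> (\<forall>x\<in>S. \<forall>y\<in>S. la_brk L x y = la_zero L)"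

definition alpha :: "('a, 'k::zero) lie_alg \<Rightarrow> enat" where
  "alpha L = Sup {ldim L S | S. abelian_subalg L S}"

section \<open>Free Lie algebra: free non-associative algebra modulo antisymmetry and Jacobi\<close>

datatype magma = Gen nat | Mul magma magma

fun mgens :: "magma \<Rightarrow> nat set" where
  "mgens (Gen i) = {i}"
| "mgens (Mul a b) = mgens a \<union> mgens b"

definition mag_mult :: "(magma \<Rightarrow> 'k::semiring_0) \<Rightarrow> (magma \<Rightarrow> 'k) \<Rightarrow> magma \<Rightarrow> 'k" where
  "mag_mult p q = (\<lambda>t. case t of Gen _ \<Rightarrow> 0 | Mul a b \<Rightarrow> p a * q b)"

text \<open>Free non-associative algebra over K on generators Gen 0, ..., Gen (g-1):
  finitely supported K-linear combinations of non-associative monomials.\<close>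
definition free_mag :: "nat \<Rightarrow> (magma \<Rightarrow> 'k::field, 'k) lie_alg" where
  "free_mag g = \<lparr> la_carrier = {p. finite {t. p t \<noteq> 0} \<and> (\<forall>t. p t \<noteq> 0 \<longrightarrow> mgens t \<subseteq> {..<g})},
      la_add = (\<lambda>p q t. p t + q t),
      la_zero = (\<lambda>t. 0),
      la_smult = (\<lambda>a p t. a * p t),
      la_brk = mag_mult \<rparr>"

definition lie_relations :: "nat \<Rightarrow> (magma \<Rightarrow> 'k::field) set" where
  "lie_relations g = (let A = free_mag g; m = la_brk A; ad = la_add A in
     {m p p | p. p \<in> la_carrier A} \<union>
     {ad (ad (m p (m q r)) (m q (m r p))) (m r (m p q)) | p q r.
        p \<in> la_carrier A \<and> q \<in> la_carrier A \<and> r \<in> la_carrier A})"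

definition free_lie :: "nat \<Rightarrow> ((magma \<Rightarrow> 'k::field) set, 'k) lie_alg" where
  "free_lie g = quot (free_mag g) (ideal_gen (free_mag g) (lie_relations g))"

definition F_gc :: "nat \<Rightarrow> nat \<Rightarrow> ((magma \<Rightarrow> 'k::field) set set, 'k) lie_alg" where
  "F_gc g c = quot (free_lie g) (lcs (free_lie g) (c + 1))"

definition M_gc :: "nat \<Rightarrow> nat \<Rightarrow> ((magma \<Rightarrow> 'k::field) set set set, 'k) lie_alg" where
  "M_gc g c = (let F = F_gc g c in quot F (brset F (lcs F 2) (lcs F 2)))"

end

theory Submission
  imports Defs
begin



locale vsb =
  fixes L :: "('a, 'k::field) lie_alg"
  assumes zero_c[simp]: "la_zero L \<in> la_carrier L"
  and add_c[simp]: "x \<in> la_carrier L \<Longrightarrow> y \<in> la_carrier L \<Longrightarrow> la_add L x y \<in> la_carrier L"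
  and smult_c[simp]: "x \<in> la_carrier L \<Longrightarrow> la_smult L a x \<in> la_carrier L"
  and brk_c[simp]: "x \<in> la_carrier L \<Longrightarrow> y \<in> la_carrier L \<Longrightarrow> la_brk L x y \<in> la_carrier L"
  and add_assoc: "x \<in> la_carrier L \<Longrightarrow> y \<in> la_carrier L \<Longrightarrow> z \<in> la_carrier L \<Longrightarrow>
      la_add L (la_add L x y) z = la_add L x (la_add L y z)"
  and add_comm: "x \<in> la_carrier L \<Longrightarrow> y \<in> la_carrier L \<Longrightarrow> la_add L x y = la_add L y x"
  and zero_add[simp]: "x \<in> la_carrier L \<Longrightarrow> la_add L (la_zero L) x = x"
  and smult_add: "x \<in> la_carrier L \<Longrightarrow> y \<in> la_carrier L \<Longrightarrow>
      la_smult L a (la_add L x y) = la_add L (la_smult L a x) (la_smult L a y)"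
  and add_smult: "x \<in> la_carrier L \<Longrightarrow> la_smult L (a + b) x = la_add L (la_smult L a x) (la_smult L b x)"
  and mult_smult: "x \<in> la_carrier L \<Longrightarrow> la_smult L (a * b) x = la_smult L a (la_smult L b x)"
  and one_smult[simp]: "x \<in> la_carrier L \<Longrightarrow> la_smult L 1 x = x"
  and zero_smult[simp]: "x \<in> la_carrier L \<Longrightarrow> la_smult L 0 x = la_zero L"
  and brk_add_l: "x \<in> la_carrier L \<Longrightarrow> y \<in> la_carrier L \<Longrightarrow> z \<in> la_carrier L \<Longrightarrow>
      la_brk L (la_add L x y) z = la_add L (la_brk L x z) (la_brk L y z)"
  and brk_add_r: "x \<in> la_carrier L \<Longrightarrow> y \<in> la_carrier L \<Longrightarrow> z \<in> la_carrier L \<Longrightarrow>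
      la_brk L x (la_add L y z) = la_add L (la_brk L x y) (la_brk L x z)"
  and brk_smult_l: "x \<in> la_carrier L \<Longrightarrow> y \<in> la_carrier L \<Longrightarrow>
      la_brk L (la_smult L a x) y = la_smult L a (la_brk L x y)"
  and brk_smult_r: "x \<in> la_carrier L \<Longrightarrow> y \<in> la_carrier L \<Longrightarrow>
      la_brk L x (la_smult L a y) = la_smult L a (la_brk L x y)"
begin

abbreviation "C \<equiv> la_carrier L"
abbreviation "ad \<equiv> la_add L"
abbreviation "sm \<equiv> la_smult L"
abbreviation "z0 \<equiv> la_zero L"
abbreviation "bk \<equiv> la_brk L"

lemma add_zero[simp]: "x \<in> C \<Longrightarrow> ad x z0 = x"
  using add_comm[of x z0] by simp

lemma add_lcomm: "x \<in> C \<Longrightarrow> y \<in> C \<Longrightarrow> z \<in> C \<Longrightarrow> ad x (ad y z) = ad y (ad x z)"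
  using add_assoc[of x y z] add_assoc[of y x z] add_comm[of x y] by simp

lemmas add_ac = add_assoc add_comm add_lcomm

lemma add_neg[simp]: "x \<in> C \<Longrightarrow> ad x (sm (-1) x) = z0"
proof -
  assume x: "x \<in> C"
  have "sm (1 + -1) x = ad (sm 1 x) (sm (-1) x)" by (rule add_smult[OF x])
  then show ?thesis using x by simp
qed

lemma neg_add[simp]: "x \<in> C \<Longrightarrow> ad (sm (-1) x) x = z0"
  using add_comm[of x "sm (-1) x"] by simp

lemma smult_zero[simp]: "sm a z0 = z0"
  using mult_smult[of z0 a 0] by simp

lemma add_cancel: "x \<in> C \<Longrightarrow> y \<in> C \<Longrightarrow> ad x (sm (-1) y) = z0 \<Longrightarrow> x = y"
proof -
  assume x: "x \<in> C" and y: "y \<in> C" and e: "ad x (sm (-1) y) = z0"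
  have "x = ad x (ad (sm (-1) y) y)" using x y by simp
  also have "\<dots> = ad (ad x (sm (-1) y)) y" using x y by (simp add: add_assoc)
  also have "\<dots> = y" using e y by simp
  finally show ?thesis .
qed

lemma smult_smult: "x \<in> C \<Longrightarrow> sm a (sm b x) = sm (a*b) x"
  by (simp add: mult_smult)

lemma add_eq_zero_neg: "a \<in> C \<Longrightarrow> b \<in> C \<Longrightarrow> ad a b = z0 \<Longrightarrow> b = sm (-1) a"
proof -
  assume a: "a \<in> C" and b: "b \<in> C" and e: "ad a b = z0"
  have "b = ad (ad (sm (-1) a) a) b" using a b by simp
  also have "\<dots> = ad (sm (-1) a) (ad a b)" using a b by (intro add_assoc) auto
  finally show ?thesis using e a by simp
qed

lemma subspace_carrier: "lsubspace L C"
  by (simp add: lsubspace_def)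

lemma subspace_Inter: "F \<noteq> {} \<Longrightarrow> (\<And>S. S \<in> F \<Longrightarrow> lsubspace L S) \<Longrightarrow> lsubspace L (\<Inter>F)"
  unfolding lsubspace_def by (auto simp: Inter_iff) (meson subsetD ex_in_conv)

lemma lspan_subspace: "X \<subseteq> C \<Longrightarrow> lsubspace L (lspan L X)"
proof -
  assume X: "X \<subseteq> C"
  have ne: "{S. lsubspace L S \<and> X \<subseteq> S} \<noteq> {}" using subspace_carrier X by blast
  show ?thesis unfolding lspan_def by (rule subspace_Inter[OF ne]) simp
qed

lemma lspan_least: "lsubspace L W \<Longrightarrow> X \<subseteq> W \<Longrightarrow> lspan L X \<subseteq> W"
  unfolding lspan_def by (rule Inter_lower) simp

lemma lspan_inc: "X \<subseteq> lspan L X"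
  unfolding lspan_def by (rule Inter_greatest) simp

lemma subspace_sub: "lsubspace L S \<Longrightarrow> S \<subseteq> C"
  unfolding lsubspace_def by blast

lemma subspace_add: "lsubspace L S \<Longrightarrow> x \<in> S \<Longrightarrow> y \<in> S \<Longrightarrow> ad x y \<in> S"
  unfolding lsubspace_def by simp

lemma subspace_smult: "lsubspace L S \<Longrightarrow> x \<in> S \<Longrightarrow> sm a x \<in> S"
  unfolding lsubspace_def by simp

lemma subspace_zero: "lsubspace L S \<Longrightarrow> z0 \<in> S"
  unfolding lsubspace_def by simp

lemma brset_subspace: "A \<subseteq> C \<Longrightarrow> B \<subseteq> C \<Longrightarrow> lsubspace L (brset L A B)"
proof -
  assume A: "A \<subseteq> C" and B: "B \<subseteq> C"
  have "{bk a b | a b. a \<in> A \<and> b \<in> B} \<subseteq> C"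
  proof
    fix z assume "z \<in> {bk a b | a b. a \<in> A \<and> b \<in> B}"
    then obtain a b where "z = bk a b" "a \<in> A" "b \<in> B" by blast
    moreover have "a \<in> C" "b \<in> C" using A B \<open>a \<in> A\<close> \<open>b \<in> B\<close> by (auto dest: subsetD)
    ultimately show "z \<in> C" by simp
  qed
  then show ?thesis unfolding brset_def by (rule lspan_subspace)
qed

lemma brset_inc: "a \<in> A \<Longrightarrow> b \<in> B \<Longrightarrow> bk a b \<in> brset L A B"
proof -
  assume "a \<in> A" "b \<in> B"
  then have "bk a b \<in> {bk a b | a b. a \<in> A \<and> b \<in> B}" by blast
  then show ?thesis unfolding brset_def using lspan_inc by (rule subsetD[rotated])
qed

lemma brset_sub: "A \<subseteq> C \<Longrightarrow> B \<subseteq> C \<Longrightarrow> brset L A B \<subseteq> C"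
  using brset_subspace subspace_sub by blast

lemma lideal_carrier: "lideal L C"
  by (simp add: lideal_def subspace_carrier)

lemma ideal_gen_lideal: "X \<subseteq> C \<Longrightarrow> lideal L (ideal_gen L X)"
proof -
  assume X: "X \<subseteq> C"
  let ?F = "{I. lideal L I \<and> X \<subseteq> I}"
  have ne: "?F \<noteq> {}" using lideal_carrier X by blast
  have "lsubspace L (\<Inter>?F)" by (rule subspace_Inter[OF ne]) (auto simp: lideal_def)
  moreover have "\<forall>x\<in>C. \<forall>y\<in>\<Inter>?F. bk x y \<in> \<Inter>?F \<and> bk y x \<in> \<Inter>?F"
  proof (intro ballI conjI InterI)
    fix x y I assume "x \<in> C" "y \<in> \<Inter>?F" "I \<in> ?F"
    then have "y \<in> I" "lideal L I" by auto
    then show "bk x y \<in> I" "bk y x \<in> I" using \<open>x \<in> C\<close> unfolding lideal_def by auto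
  qed
  ultimately show ?thesis unfolding ideal_gen_def lideal_def by blast
qed

lemma ideal_gen_inc: "X \<subseteq> ideal_gen L X"
  unfolding ideal_gen_def by (rule Inter_greatest) simp

lemma ideal_gen_least: "lideal L I \<Longrightarrow> X \<subseteq> I \<Longrightarrow> ideal_gen L X \<subseteq> I"
  unfolding ideal_gen_def by (rule Inter_lower) simp

end

locale liealg = vsb +
  assumes alt[simp]: "x \<in> la_carrier L \<Longrightarrow> la_brk L x x = la_zero L"
  and jac: "x \<in> la_carrier L \<Longrightarrow> y \<in> la_carrier L \<Longrightarrow> z \<in> la_carrier L \<Longrightarrow>
     la_add L (la_add L (la_brk L x (la_brk L y z)) (la_brk L y (la_brk L z x))) (la_brk L z (la_brk L x y))
       = la_zero L"
begin

lemma anticomm: "x \<in> C \<Longrightarrow> y \<in> C \<Longrightarrow> bk y x = sm (-1) (bk x y)"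
proof -
  assume x: "x \<in> C" and y: "y \<in> C"
  have "ad (ad (bk x x) (bk y x)) (ad (bk x y) (bk y y)) = z0"
    using alt[of "ad x y"] x y by (simp add: brk_add_l brk_add_r del: alt)
  then have "ad (bk y x) (bk x y) = z0" using x y by simp
  then have "ad (bk x y) (bk y x) = z0" using x y add_comm[of "bk y x" "bk x y"] by simp
  then show ?thesis using add_eq_zero_neg[of "bk x y" "bk y x"] x y by simp
qed

end

definition hom :: "('a, 'k) lie_alg \<Rightarrow> ('b, 'k) lie_alg \<Rightarrow> ('a \<Rightarrow> 'b) \<Rightarrow> bool" where
  "hom L T f \<longleftrightarrow> (\<forall>x\<in>la_carrier L. f x \<in> la_carrier T) \<and> f (la_zero L) = la_zero T \<and>
     (\<forall>x\<in>la_carrier L. \<forall>y\<in>la_carrier L. f (la_add L x y) = la_add T (f x) (f y)) \<and>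
     (\<forall>a. \<forall>x\<in>la_carrier L. f (la_smult L a x) = la_smult T a (f x)) \<and>
     (\<forall>x\<in>la_carrier L. \<forall>y\<in>la_carrier L. f (la_brk L x y) = la_brk T (f x) (f y))"

lemma homD:
  assumes "hom L T f"
  shows "x \<in> la_carrier L \<Longrightarrow> f x \<in> la_carrier T"
    and "f (la_zero L) = la_zero T"
    and "x \<in> la_carrier L \<Longrightarrow> y \<in> la_carrier L \<Longrightarrow> f (la_add L x y) = la_add T (f x) (f y)"
    and "x \<in> la_carrier L \<Longrightarrow> f (la_smult L a x) = la_smult T a (f x)"
    and "x \<in> la_carrier L \<Longrightarrow> y \<in> la_carrier L \<Longrightarrow> f (la_brk L x y) = la_brk T (f x) (f y)"
  using assms unfolding hom_def by auto

lemma hom_comp: "hom L1 L2 f \<Longrightarrow> hom L2 L3 h \<Longrightarrow> hom L1 L3 (h \<circ> f)"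
  unfolding hom_def by (simp add: o_def)

lemma vsb_surj:
  assumes V: "vsb L" and H: "hom L Q f" and S: "f ` la_carrier L = la_carrier Q"
  shows "vsb Q"
proof -
  interpret vsb L by (rule V)
  note h = homD[OF H]
  have ex: "\<And>u. u \<in> la_carrier Q \<Longrightarrow> \<exists>x\<in>C. u = f x" using S by auto
  show ?thesis
  proof
    show "la_zero Q \<in> la_carrier Q" using h(1)[OF zero_c] h(2) by simp
  next
    fix x y assume "x \<in> la_carrier Q" "y \<in> la_carrier Q"
    then obtain x' y' where "x' \<in> C" "y' \<in> C" "x = f x'" "y = f y'" using ex by metis
    then show "la_add Q x y \<in> la_carrier Q" "la_brk Q x y \<in> la_carrier Q"
      "la_add Q x y = la_add Q y x"
      using h(1) by (auto simp flip: h(3) h(5) simp: add_comm)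
  next
    fix x a assume "x \<in> la_carrier Q"
    then obtain x' where "x' \<in> C" "x = f x'" using ex by metis
    then show "la_smult Q a x \<in> la_carrier Q" "la_add Q (la_zero Q) x = x"
       "la_smult Q 1 x = x" "la_smult Q 0 x = la_zero Q"
      using h(1) by (auto simp flip: h(2) h(3) h(4))
  next
    fix x y z assume "x \<in> la_carrier Q" "y \<in> la_carrier Q" "z \<in> la_carrier Q"
    then obtain x' y' z' where "x' \<in> C" "y' \<in> C" "z' \<in> C" "x = f x'" "y = f y'" "z = f z'" using ex by metis
    then show "la_add Q (la_add Q x y) z = la_add Q x (la_add Q y z)"
      "la_brk Q (la_add Q x y) z = la_add Q (la_brk Q x z) (la_brk Q y z)"
      "la_brk Q x (la_add Q y z) = la_add Q (la_brk Q x y) (la_brk Q x z)"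
      using h(1) by (auto simp flip: h(3) h(5) simp: add_assoc brk_add_l brk_add_r)
  next
    fix x y a b assume "x \<in> la_carrier Q" "y \<in> la_carrier Q"
    then obtain x' y' where "x' \<in> C" "y' \<in> C" "x = f x'" "y = f y'" using ex by metis
    then show "la_smult Q a (la_add Q x y) = la_add Q (la_smult Q a x) (la_smult Q a y)"
      "la_smult Q (a + b) x = la_add Q (la_smult Q a x) (la_smult Q b x)"
      "la_smult Q (a * b) x = la_smult Q a (la_smult Q b x)"
      "la_brk Q (la_smult Q a x) y = la_smult Q a (la_brk Q x y)"
      "la_brk Q x (la_smult Q a y) = la_smult Q a (la_brk Q x y)"
      using h(1) by (auto simp flip: h(3) h(4) h(5) simp: smult_add add_smult mult_smult brk_smult_l brk_smult_r)
  qed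
qed

lemma lie_surj:
  assumes V: "liealg L" and H: "hom L Q f" and S: "f ` la_carrier L = la_carrier Q"
  shows "liealg Q"
proof -
  interpret liealg L by (rule V)
  note h = homD[OF H]
  have ex: "\<And>u. u \<in> la_carrier Q \<Longrightarrow> \<exists>x\<in>C. u = f x" using S by auto
  interpret Q: vsb Q by (rule vsb_surj[OF vsb_axioms H S])
  show ?thesis
  proof
    fix x assume "x \<in> la_carrier Q"
    then obtain x' where "x' \<in> C" "x = f x'" using ex by metis
    then show "la_brk Q x x = la_zero Q" using h(1) by (auto simp flip: h(5) h(2))
  next
    fix x y z assume "x \<in> la_carrier Q" "y \<in> la_carrier Q" "z \<in> la_carrier Q"
    then obtain x' y' z' where "x' \<in> C" "y' \<in> C" "z' \<in> C" "x = f x'" "y = f y'" "z = f z'" using ex by metis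
    then show "la_add Q (la_add Q (la_brk Q x (la_brk Q y z)) (la_brk Q y (la_brk Q z x))) (la_brk Q z (la_brk Q x y))
       = la_zero Q"
      using h(1) by (auto simp flip: h(2) h(3) h(5) simp: jac)
  qed
qed


context vsb
begin

lemma coset_mem: "lsubspace L I \<Longrightarrow> x \<in> C \<Longrightarrow> x \<in> coset L I x"
  unfolding coset_def using subspace_zero[of I] by (auto intro!: bexI[of _ z0])

lemma coset_sub: "lsubspace L I \<Longrightarrow> x \<in> C \<Longrightarrow> coset L I x \<subseteq> C"
  unfolding coset_def using subspace_sub[of I] by (auto dest: subsetD)

lemma rep_coset_ex: "lsubspace L I \<Longrightarrow> x \<in> C \<Longrightarrow> \<exists>i\<in>I. rep (coset L I x) = ad x i"
proof -
  assume I: "lsubspace L I" and x: "x \<in> C"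
  have "rep (coset L I x) \<in> coset L I x"
    unfolding rep_def by (rule someI[of _ x]) (rule coset_mem[OF I x])
  then show ?thesis unfolding coset_def by simp
qed

lemma coset_add_eq:
  assumes I: "lsubspace L I" and x: "x \<in> C" and i: "i \<in> I"
  shows "coset L I (ad x i) = coset L I x"
proof -
  have iC: "i \<in> C" using subspace_sub[OF I] i by (auto dest: subsetD)
  have IC: "\<And>k. k \<in> I \<Longrightarrow> k \<in> C" using subspace_sub[OF I] by (auto dest: subsetD)
  show ?thesis unfolding coset_def
  proof (intro set_eqI iffI)
    fix y assume "y \<in> {y. \<exists>k\<in>I. y = ad (ad x i) k}"
    then obtain k where k: "k \<in> I" "y = ad (ad x i) k" by blast
    have "ad i k \<in> I" by (rule subspace_add[OF I i k(1)])
    moreover have "y = ad x (ad i k)" using k x iC IC[OF k(1)] by (simp add: add_assoc)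
    ultimately show "y \<in> {y. \<exists>k\<in>I. y = ad x k}" by blast
  next
    fix y assume "y \<in> {y. \<exists>k\<in>I. y = ad x k}"
    then obtain k where k: "k \<in> I" "y = ad x k" by blast
    have "ad (sm (-1) i) k \<in> I" by (rule subspace_add[OF I subspace_smult[OF I i] k(1)])
    moreover have "y = ad (ad x i) (ad (sm (-1) i) k)"
    proof -
      have "ad (ad x i) (ad (sm (-1) i) k) = ad x (ad (ad i (sm (-1) i)) k)"
        using k x iC IC[OF k(1)] by (simp add: add_assoc del: add_neg)
      also have "\<dots> = y" using k x iC IC[OF k(1)] by simp
      finally show ?thesis by simp
    qed
    ultimately show "y \<in> {y. \<exists>k\<in>I. y = ad (ad x i) k}" by blast
  qed
qed

lemma coset_zero_iff:
  assumes I: "lsubspace L I" and x: "x \<in> C"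
  shows "coset L I x = coset L I z0 \<longleftrightarrow> x \<in> I"
proof
  assume e: "coset L I x = coset L I z0"
  have "x \<in> coset L I z0" using coset_mem[OF I x] e by simp
  then obtain k where "k \<in> I" "x = ad z0 k" unfolding coset_def by blast
  moreover have "k \<in> C" using subspace_sub[OF I] \<open>k \<in> I\<close> by (auto dest: subsetD)
  ultimately show "x \<in> I" by simp
next
  assume "x \<in> I"
  then have "coset L I (ad z0 x) = coset L I z0" by (rule coset_add_eq[OF I zero_c])
  then show "coset L I x = coset L I z0" using x by simp
qed

lemma quot_hom:
  assumes I: "lideal L I"
  shows "hom L (quot L I) (coset L I)" and "coset L I ` C = la_carrier (quot L I)"
proof -
  have S: "lsubspace L I" using I unfolding lideal_def by simp
  have IC: "\<And>k. k \<in> I \<Longrightarrow> k \<in> C" using subspace_sub[OF S] by (auto dest: subsetD)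
  have br: "\<And>x y. x \<in> C \<Longrightarrow> y \<in> I \<Longrightarrow> bk x y \<in> I \<and> bk y x \<in> I" using I unfolding lideal_def by simp
  show "coset L I ` C = la_carrier (quot L I)" by (simp add: quot_def)
  show "hom L (quot L I) (coset L I)"
    unfolding hom_def
  proof (intro conjI ballI allI)
    fix x assume "x \<in> C" then show "coset L I x \<in> la_carrier (quot L I)" by (simp add: quot_def)
  next
    show "coset L I z0 = la_zero (quot L I)" by (simp add: quot_def)
  next
    fix x y assume x: "x \<in> C" and y: "y \<in> C"
    obtain i where i: "i \<in> I" "rep (coset L I x) = ad x i" using rep_coset_ex[OF S x] by blast
    obtain j where j: "j \<in> I" "rep (coset L I y) = ad y j" using rep_coset_ex[OF S y] by blast
    have iC: "i \<in> C" and jC: "j \<in> C" using IC i j by auto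
    have "la_add (quot L I) (coset L I x) (coset L I y) = coset L I (ad (ad x i) (ad y j))"
      using i j by (simp add: quot_def)
    also have "ad (ad x i) (ad y j) = ad (ad x y) (ad i j)"
      using x y iC jC by (simp add: add_assoc add_lcomm)
    also have "coset L I \<dots> = coset L I (ad x y)"
      by (rule coset_add_eq[OF S]) (use x y subspace_add[OF S i(1) j(1)] in auto)
    finally show "coset L I (ad x y) = la_add (quot L I) (coset L I x) (coset L I y)" by simp
    have "la_brk (quot L I) (coset L I x) (coset L I y) = coset L I (bk (ad x i) (ad y j))"
      using i j by (simp add: quot_def)
    also have "bk (ad x i) (ad y j) = ad (bk x y) (ad (bk i y) (ad (bk x j) (bk i j)))"
      using x y iC jC by (simp add: brk_add_l brk_add_r add_assoc)
    also have "coset L I \<dots> = coset L I (bk x y)"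
    proof (rule coset_add_eq[OF S])
      show "bk x y \<in> C" using x y by simp
      have "bk i y \<in> I" "bk x j \<in> I" "bk i j \<in> I" using br x y iC i(1) j(1) by auto
      then show "ad (bk i y) (ad (bk x j) (bk i j)) \<in> I" using subspace_add[OF S] by auto
    qed
    finally show "coset L I (bk x y) = la_brk (quot L I) (coset L I x) (coset L I y)" by simp
  next
    fix a x assume x: "x \<in> C"
    obtain i where i: "i \<in> I" "rep (coset L I x) = ad x i" using rep_coset_ex[OF S x] by blast
    have iC: "i \<in> C" using IC i by auto
    have "la_smult (quot L I) a (coset L I x) = coset L I (sm a (ad x i))"
      using i by (simp add: quot_def)
    also have "sm a (ad x i) = ad (sm a x) (sm a i)" using x iC by (simp add: smult_add)
    also have "coset L I \<dots> = coset L I (sm a x)"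
      by (rule coset_add_eq[OF S]) (use x subspace_smult[OF S i(1)] in auto)
    finally show "coset L I (sm a x) = la_smult (quot L I) a (coset L I x)" by simp
  qed
qed

lemma quot_vsb: "lideal L I \<Longrightarrow> vsb (quot L I)"
  using vsb_surj[OF vsb_axioms quot_hom] by blast

lemma quot_zero_iff: "lideal L I \<Longrightarrow> x \<in> C \<Longrightarrow> coset L I x = la_zero (quot L I) \<longleftrightarrow> x \<in> I"
  using coset_zero_iff[of I x] unfolding lideal_def by (simp add: quot_def)

lemma factor:
  assumes I: "lideal L I" and T: "vsb T" and f: "hom L T f" and k: "\<And>i. i \<in> I \<Longrightarrow> f i = la_zero T"
  shows "hom (quot L I) T (\<lambda>X. f (rep X))" and "\<And>x. x \<in> C \<Longrightarrow> f (rep (coset L I x)) = f x"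
proof -
  interpret T: vsb T by (rule T)
  have S: "lsubspace L I" using I unfolding lideal_def by simp
  have IC: "\<And>k. k \<in> I \<Longrightarrow> k \<in> C" using subspace_sub[OF S] by (auto dest: subsetD)
  note h = homD[OF f]
  show fr: "\<And>x. x \<in> C \<Longrightarrow> f (rep (coset L I x)) = f x"
  proof -
    fix x assume x: "x \<in> C"
    obtain i where i: "i \<in> I" "rep (coset L I x) = ad x i" using rep_coset_ex[OF S x] by blast
    show "f (rep (coset L I x)) = f x" using i x IC[OF i(1)] h(1)[OF x] by (simp add: h(3) k)
  qed
  note q = homD[OF quot_hom(1)[OF I]]
  have ex: "\<And>u. u \<in> la_carrier (quot L I) \<Longrightarrow> \<exists>x\<in>C. u = coset L I x"
    using quot_hom(2)[OF I] by auto
  show "hom (quot L I) T (\<lambda>X. f (rep X))"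
    unfolding hom_def
  proof (intro conjI ballI allI)
    fix u assume "u \<in> la_carrier (quot L I)"
    then obtain x where "x \<in> C" "u = coset L I x" using ex by blast
    then show "f (rep u) \<in> la_carrier T" using fr h(1) by simp
  next
    show "f (rep (la_zero (quot L I))) = la_zero T" using fr[OF zero_c] h(2) q(2) by simp
  next
    fix u v assume "u \<in> la_carrier (quot L I)" "v \<in> la_carrier (quot L I)"
    then obtain x y where xy: "x \<in> C" "u = coset L I x" "y \<in> C" "v = coset L I y" using ex by metis
    show "f (rep (la_add (quot L I) u v)) = la_add T (f (rep u)) (f (rep v))"
      using xy fr q(3)[of x y, symmetric] h(3) by simp
    show "f (rep (la_brk (quot L I) u v)) = la_brk T (f (rep u)) (f (rep v))"
      using xy fr q(5)[of x y, symmetric] h(5) by simp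
  next
    fix a u assume "u \<in> la_carrier (quot L I)"
    then obtain x where xy: "x \<in> C" "u = coset L I x" using ex by metis
    show "f (rep (la_smult (quot L I) a u)) = la_smult T a (f (rep u))"
      using xy fr q(4)[of x a, symmetric] h(4) by simp
  qed
qed

end

lemma quot_lie: "liealg L \<Longrightarrow> lideal L I \<Longrightarrow> liealg (quot L I)"
  using lie_surj vsb.quot_hom liealg.axioms(1) by metis


context vsb
begin

lemma brk_zero_r[simp]: "x \<in> C \<Longrightarrow> bk x z0 = z0"
  using brk_smult_r[of x z0 0] by simp

lemma brk_zero_l[simp]: "x \<in> C \<Longrightarrow> bk z0 x = z0"
  using brk_smult_l[of z0 x 0] by simp

lemma pre_brk_subspace:
  assumes B: "lsubspace L B" and x: "x \<in> C"
  shows "lsubspace L {z \<in> C. bk x z \<in> B}"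
  unfolding lsubspace_def using x subspace_zero[OF B] subspace_add[OF B] subspace_smult[OF B]
  by (auto simp: brk_add_r brk_smult_r)

end

context liealg
begin

lemma lcs_ideal: "lideal L (lcs L k)"
proof (induction k)
  case 0 then show ?case using lideal_carrier by simp
next
  case (Suc n)
  show ?case
  proof (cases "n = 0")
    case True then show ?thesis using lideal_carrier by simp
  next
    case False
    let ?B = "brset L C (lcs L n)"
    have nC: "lcs L n \<subseteq> C" using Suc.IH unfolding lideal_def using subspace_sub by blast
    have Bs: "lsubspace L ?B" by (rule brset_subspace) (use nC in auto)
    have BC: "\<And>z. z \<in> ?B \<Longrightarrow> z \<in> C" using subspace_sub[OF Bs] by (auto dest: subsetD)
    have r: "bk x y \<in> ?B" if x: "x \<in> C" and y: "y \<in> ?B" for x y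
    proof -
      have sub: "lspan L {bk a b |a b. a \<in> C \<and> b \<in> lcs L n} \<subseteq> {z \<in> C. bk x z \<in> ?B}"
      proof (rule lspan_least)
        show "lsubspace L {z \<in> C. bk x z \<in> ?B}" by (rule pre_brk_subspace[OF Bs x])
        show "{bk a b |a b. a \<in> C \<and> b \<in> lcs L n} \<subseteq> {z \<in> C. bk x z \<in> ?B}"
        proof
          fix z assume "z \<in> {bk a b |a b. a \<in> C \<and> b \<in> lcs L n}"
          then obtain a b where ab: "z = bk a b" "a \<in> C" "b \<in> lcs L n" by blast
          have "bk a b \<in> lcs L n" using Suc.IH ab unfolding lideal_def by simp
          then have "bk x (bk a b) \<in> ?B" using brset_inc[of x C] x by simp
          moreover have "bk a b \<in> C" using ab nC by (auto dest: subsetD)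
          ultimately show "z \<in> {z \<in> C. bk x z \<in> ?B}" using ab by simp
        qed
      qed
      have "y \<in> lspan L {bk a b |a b. a \<in> C \<and> b \<in> lcs L n}" using y by (simp add: brset_def)
      then show ?thesis using sub by blast
    qed
    have "bk x y \<in> ?B \<and> bk y x \<in> ?B" if x: "x \<in> C" and y: "y \<in> ?B" for x y
      using r[OF x y] anticomm[OF x BC[OF y]] subspace_smult[OF Bs] by simp
    then show ?thesis using False Bs unfolding lideal_def by simp
  qed
qed

lemma lcs_sub: "lcs L k \<subseteq> C"
  using lcs_ideal[of k] subspace_sub unfolding lideal_def by blast

lemma lcs2: "lcs L 2 = brset L C C"
  by (simp add: eval_nat_numeral)

lemma metab_ideal: "lideal L (brset L (lcs L 2) (lcs L 2))"
proof -
  let ?D = "lcs L 2"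
  let ?B = "brset L ?D ?D"
  have DC: "?D \<subseteq> C" by (rule lcs_sub)
  have Di: "\<And>x y. x \<in> C \<Longrightarrow> y \<in> ?D \<Longrightarrow> bk x y \<in> ?D \<and> bk y x \<in> ?D"
    using lcs_ideal[of 2] unfolding lideal_def by simp
  have Bs: "lsubspace L ?B" by (rule brset_subspace) (use DC in auto)
  have BC: "\<And>z. z \<in> ?B \<Longrightarrow> z \<in> C" using subspace_sub[OF Bs] by (auto dest: subsetD)
  have r: "bk x y \<in> ?B" if x: "x \<in> C" and y: "y \<in> ?B" for x y
  proof -
    have sub: "lspan L {bk a b |a b. a \<in> ?D \<and> b \<in> ?D} \<subseteq> {z \<in> C. bk x z \<in> ?B}"
    proof (rule lspan_least)
      show "lsubspace L {z \<in> C. bk x z \<in> ?B}" by (rule pre_brk_subspace[OF Bs x])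
      show "{bk a b |a b. a \<in> ?D \<and> b \<in> ?D} \<subseteq> {z \<in> C. bk x z \<in> ?B}"
      proof
        fix z assume "z \<in> {bk a b |a b. a \<in> ?D \<and> b \<in> ?D}"
        then obtain a b where ab: "z = bk a b" "a \<in> ?D" "b \<in> ?D" by blast
        have aC: "a \<in> C" and bC: "b \<in> C" using ab DC by (auto dest: subsetD)
        have q1: "bk a (bk b x) \<in> ?B" using brset_inc[OF ab(2)] Di[OF x ab(3)] by simp
        have q2: "bk b (bk x a) \<in> ?B" using brset_inc[OF ab(3)] Di[OF x ab(2)] by simp
        have "ad (ad (bk x (bk a b)) (bk a (bk b x))) (bk b (bk x a)) = z0"
          using jac[OF x aC bC] .
        then have "ad (ad (bk a (bk b x)) (bk b (bk x a))) (bk x (bk a b)) = z0"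
          using x aC bC by (simp add: add_assoc add_comm add_lcomm)
        then have "bk x (bk a b) = sm (-1) (ad (bk a (bk b x)) (bk b (bk x a)))"
          using x aC bC by (intro add_eq_zero_neg) auto
        moreover have "sm (-1) (ad (bk a (bk b x)) (bk b (bk x a))) \<in> ?B"
          using q1 q2 subspace_add[OF Bs] subspace_smult[OF Bs] by simp
        ultimately show "z \<in> {z \<in> C. bk x z \<in> ?B}" using ab aC bC by simp
      qed
    qed
    have "y \<in> lspan L {bk a b |a b. a \<in> ?D \<and> b \<in> ?D}" using y by (simp add: brset_def)
    then show ?thesis using sub by blast
  qed
  have "bk x y \<in> ?B \<and> bk y x \<in> ?B" if x: "x \<in> C" and y: "y \<in> ?B" for x y
    using r[OF x y] anticomm[OF x BC[OF y]] subspace_smult[OF Bs] by simp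
  then show ?thesis using Bs unfolding lideal_def by simp
qed

end


lemma mag_mult_nz: "mag_mult p q t \<noteq> 0 \<Longrightarrow> \<exists>a b. t = Mul a b \<and> p a \<noteq> 0 \<and> q b \<noteq> 0"
  by (cases t) (auto simp: mag_mult_def)

lemma free_mag_carrier: "la_carrier (free_mag g) =
   {p. finite {t. p t \<noteq> 0} \<and> (\<forall>t. p t \<noteq> 0 \<longrightarrow> mgens t \<subseteq> {..<g})}"
  by (simp add: free_mag_def)

lemma free_mag_vsb: "vsb (free_mag g :: (magma \<Rightarrow> 'k::field, 'k) lie_alg)"
proof
  let ?C = "la_carrier (free_mag g :: (magma \<Rightarrow> 'k::field, 'k) lie_alg)"
  show "la_zero (free_mag g) \<in> ?C" by (simp add: free_mag_def)
next
  fix x y :: "magma \<Rightarrow> 'k" assume x: "x \<in> la_carrier (free_mag g)" and y: "y \<in> la_carrier (free_mag g)"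
  have fx: "finite {t. x t \<noteq> 0}" and fy: "finite {t. y t \<noteq> 0}" using x y by (auto simp: free_mag_def)
  have "{t. x t + y t \<noteq> 0} \<subseteq> {t. x t \<noteq> 0} \<union> {t. y t \<noteq> 0}" by auto
  then have "finite {t. x t + y t \<noteq> 0}" using fx fy finite_subset by blast
  moreover have "\<forall>t. x t + y t \<noteq> 0 \<longrightarrow> mgens t \<subseteq> {..<g}"
  proof (intro allI impI)
    fix t assume "x t + y t \<noteq> 0"
    then have "x t \<noteq> 0 \<or> y t \<noteq> 0" by auto
    then show "mgens t \<subseteq> {..<g}" using x y by (auto simp: free_mag_def)
  qed
  ultimately show "la_add (free_mag g) x y \<in> la_carrier (free_mag g)" by (simp add: free_mag_def)
  have "{t. mag_mult x y t \<noteq> 0} \<subseteq> (\<lambda>(a, b). Mul a b) ` ({t. x t \<noteq> 0} \<times> {t. y t \<noteq> 0})"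
    using mag_mult_nz by fastforce
  then have "finite {t. mag_mult x y t \<noteq> 0}" using fx fy finite_subset by blast
  moreover have "\<forall>t. mag_mult x y t \<noteq> 0 \<longrightarrow> mgens t \<subseteq> {..<g}"
  proof (intro allI impI)
    fix t assume "mag_mult x y t \<noteq> 0"
    then obtain a b where "t = Mul a b" "x a \<noteq> 0" "y b \<noteq> 0" using mag_mult_nz by blast
    then show "mgens t \<subseteq> {..<g}" using x y by (auto simp: free_mag_def)
  qed
  ultimately show "la_brk (free_mag g) x y \<in> la_carrier (free_mag g)" by (simp add: free_mag_def)
  show "la_add (free_mag g) x y = la_add (free_mag g) y x" by (simp add: free_mag_def add.commute)
next
  fix x :: "magma \<Rightarrow> 'k" and a :: 'k assume x: "x \<in> la_carrier (free_mag g)"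
  have "{t. a * x t \<noteq> 0} \<subseteq> {t. x t \<noteq> 0}" by auto
  then show "la_smult (free_mag g) a x \<in> la_carrier (free_mag g)"
    using x by (auto simp: free_mag_def intro: finite_subset)
qed (auto simp: free_mag_def mag_mult_def fun_eq_iff algebra_simps split: magma.split)

lemma lie_relations_sub: "lie_relations g \<subseteq> la_carrier (free_mag g :: (magma \<Rightarrow> 'k::field, 'k) lie_alg)"
proof -
  interpret vsb "free_mag g :: (magma \<Rightarrow> 'k::field, 'k) lie_alg" by (rule free_mag_vsb)
  show ?thesis unfolding lie_relations_def Let_def by auto
qed

lemma free_lie_lie: "liealg (free_lie g :: ((magma \<Rightarrow> 'k::field) set, 'k) lie_alg)"
proof -
  let ?L = "free_mag g :: (magma \<Rightarrow> 'k::field, 'k) lie_alg"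
  let ?I = "ideal_gen ?L (lie_relations g)"
  interpret vsb ?L by (rule free_mag_vsb)
  have I: "lideal ?L ?I" by (rule ideal_gen_lideal[OF lie_relations_sub])
  have RI: "\<And>r. r \<in> lie_relations g \<Longrightarrow> r \<in> ?I" using ideal_gen_inc by blast
  note q = homD[OF quot_hom(1)[OF I]]
  have ex: "\<And>u. u \<in> la_carrier (quot ?L ?I) \<Longrightarrow> \<exists>x\<in>C. u = coset ?L ?I x"
    using quot_hom(2)[OF I] by auto
  interpret Q: vsb "quot ?L ?I" by (rule quot_vsb[OF I])
  have "liealg (quot ?L ?I)"
  proof
    fix u assume "u \<in> la_carrier (quot ?L ?I)"
    then obtain x where x: "x \<in> C" "u = coset ?L ?I x" using ex by blast
    have "bk x x \<in> lie_relations g" using x unfolding lie_relations_def Let_def by auto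
    then show "la_brk (quot ?L ?I) u u = la_zero (quot ?L ?I)"
      using x q(5)[of x x] quot_zero_iff[OF I, of "bk x x"] RI by simp
  next
    fix u v w assume "u \<in> la_carrier (quot ?L ?I)" "v \<in> la_carrier (quot ?L ?I)" "w \<in> la_carrier (quot ?L ?I)"
    then obtain x y z where xyz: "x \<in> C" "u = coset ?L ?I x" "y \<in> C" "v = coset ?L ?I y"
       "z \<in> C" "w = coset ?L ?I z" using ex by metis
    let ?r = "ad (ad (bk x (bk y z)) (bk y (bk z x))) (bk z (bk x y))"
    have r: "?r \<in> lie_relations g" using xyz unfolding lie_relations_def Let_def by blast
    have rC: "?r \<in> C" using xyz by simp
    have "coset ?L ?I ?r = la_add (quot ?L ?I) (la_add (quot ?L ?I) (la_brk (quot ?L ?I) u (la_brk (quot ?L ?I) v w))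
       (la_brk (quot ?L ?I) v (la_brk (quot ?L ?I) w u))) (la_brk (quot ?L ?I) w (la_brk (quot ?L ?I) u v))"
      using xyz by (simp add: q)
    then show "la_add (quot ?L ?I) (la_add (quot ?L ?I) (la_brk (quot ?L ?I) u (la_brk (quot ?L ?I) v w))
       (la_brk (quot ?L ?I) v (la_brk (quot ?L ?I) w u))) (la_brk (quot ?L ?I) w (la_brk (quot ?L ?I) u v)) =
       la_zero (quot ?L ?I)"
      using quot_zero_iff[OF I rC] RI[OF r] by simp
  qed
  then show ?thesis by (simp add: free_lie_def)
qed

lemma F_lie: "liealg (F_gc g c :: ((magma \<Rightarrow> 'k::field) set set, 'k) lie_alg)"
  unfolding F_gc_def by (rule quot_lie[OF free_lie_lie liealg.lcs_ideal[OF free_lie_lie]])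

lemma M_lie: "liealg (M_gc g c :: ((magma \<Rightarrow> 'k::field) set set set, 'k) lie_alg)"
  unfolding M_gc_def Let_def by (rule quot_lie[OF F_lie liealg.metab_ideal[OF F_lie]])


definition Tbr :: "(nat list \<Rightarrow> 'k::field) \<Rightarrow> (nat list \<Rightarrow> 'k) \<Rightarrow> nat list \<Rightarrow> 'k" where
  "Tbr x y w = (if length w = 2 then x [w!0] * y [w!1] - y [w!0] * x [w!1]
     else if length w = 3 then x [w!0] * y [w!1, w!2] + x [w!1] * y [w!0, w!2]
        - (y [w!0] * x [w!1, w!2] + y [w!1] * x [w!0, w!2])
     else 0)"

definition TA :: "(nat list \<Rightarrow> 'k::field, 'k) lie_alg" where
  "TA = \<lparr> la_carrier = UNIV, la_add = (\<lambda>x y w. x w + y w), la_zero = (\<lambda>w. 0),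
     la_smult = (\<lambda>a x w. a * x w), la_brk = Tbr \<rparr>"

lemma TA_simps[simp]: "la_carrier TA = UNIV" "la_add TA x y = (\<lambda>w. x w + y w)" "la_zero TA = (\<lambda>w. 0)"
  "la_smult TA a x = (\<lambda>w. a * x w)" "la_brk TA = Tbr"
  by (simp_all add: TA_def)

lemma Tbr_len: "length w \<noteq> 2 \<Longrightarrow> length w \<noteq> 3 \<Longrightarrow> Tbr x y w = 0"
  by (simp add: Tbr_def)

lemma Tbr2[simp]: "Tbr x y [i, j] = x [i] * y [j] - y [i] * x [j]"
  by (simp add: Tbr_def)

lemma Tbr3[simp]: "Tbr x y [k, i, j] = x [k] * y [i, j] + x [i] * y [k, j] - (y [k] * x [i, j] + y [i] * x [k, j])"
  by (simp add: Tbr_def)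

lemma Tbr1[simp]: "Tbr x y [i] = 0" and Tbr0[simp]: "Tbr x y [] = 0"
  by (simp_all add: Tbr_def)

lemma list_len_cases:
  "(w = [] \<Longrightarrow> P) \<Longrightarrow> (\<And>i. w = [i] \<Longrightarrow> P) \<Longrightarrow> (\<And>i j. w = [i, j] \<Longrightarrow> P) \<Longrightarrow>
   (\<And>k i j. w = [k, i, j] \<Longrightarrow> P) \<Longrightarrow> (length w \<ge> 4 \<Longrightarrow> P) \<Longrightarrow> P"
  by (cases w; cases "tl w"; cases "tl (tl w)"; cases "tl (tl (tl w))") auto

lemma Tbr_ext: "(\<And>i j. f [i, j] = g [i, j]) \<Longrightarrow> (\<And>k i j. f [k, i, j] = g [k, i, j]) \<Longrightarrow>
   (\<And>w. length w \<noteq> 2 \<Longrightarrow> length w \<noteq> 3 \<Longrightarrow> f w = g w) \<Longrightarrow> f = g"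
proof
  fix w
  assume a: "\<And>i j. f [i, j] = g [i, j]" "\<And>k i j. f [k, i, j] = g [k, i, j]"
    "\<And>w. length w \<noteq> 2 \<Longrightarrow> length w \<noteq> 3 \<Longrightarrow> f w = g w"
  show "f w = g w"
    by (rule list_len_cases[of w]) (use a in auto)
qed

lemma TA_lie: "liealg (TA :: (nat list \<Rightarrow> 'k::field, 'k) lie_alg)"
proof
  fix x y z :: "nat list \<Rightarrow> 'k" and a :: 'k
  show "la_brk TA (la_add TA x y) z = la_add TA (la_brk TA x z) (la_brk TA y z)"
    by (auto intro!: Tbr_ext simp: Tbr_len algebra_simps)
  show "la_brk TA x (la_add TA y z) = la_add TA (la_brk TA x y) (la_brk TA x z)"
    by (auto intro!: Tbr_ext simp: Tbr_len algebra_simps)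
  show "la_brk TA (la_smult TA a x) y = la_smult TA a (la_brk TA x y)"
    by (auto intro!: Tbr_ext simp: Tbr_len algebra_simps)
  show "la_brk TA x (la_smult TA a y) = la_smult TA a (la_brk TA x y)"
    by (auto intro!: Tbr_ext simp: Tbr_len algebra_simps)
  show "la_brk TA x x = la_zero TA"
    by (auto intro!: Tbr_ext simp: Tbr_len algebra_simps)
  show "la_add TA (la_add TA (la_brk TA x (la_brk TA y z)) (la_brk TA y (la_brk TA z x))) (la_brk TA z (la_brk TA x y)) =
    la_zero TA"
    by (auto intro!: Tbr_ext simp: Tbr_len algebra_simps)
qed (auto simp: algebra_simps)


lemma Tbr_add_l: "Tbr (\<lambda>w. x w + y w) z = (\<lambda>w. Tbr x z w + Tbr y z w)"
  by (auto intro!: Tbr_ext simp: Tbr_len algebra_simps)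
lemma Tbr_add_r: "Tbr z (\<lambda>w. x w + y w) = (\<lambda>w. Tbr z x w + Tbr z y w)"
  by (auto intro!: Tbr_ext simp: Tbr_len algebra_simps)
lemma Tbr_zero_l: "Tbr (\<lambda>w. 0) z = (\<lambda>w. 0)"
  by (auto intro!: Tbr_ext simp: Tbr_len algebra_simps)
lemma Tbr_zero_r: "Tbr z (\<lambda>w. 0) = (\<lambda>w. 0)"
  by (auto intro!: Tbr_ext simp: Tbr_len algebra_simps)
lemma Tbr_scale: "Tbr (\<lambda>w. a * x w) (\<lambda>w. b * y w) = (\<lambda>w. a * b * Tbr x y w)"
  by (auto intro!: Tbr_ext simp: Tbr_len algebra_simps)

lemma Tbr_sum_l: "finite A \<Longrightarrow> Tbr (\<lambda>w. \<Sum>a\<in>A. f a w) y = (\<lambda>w. \<Sum>a\<in>A. Tbr (f a) y w)"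
  by (induction A rule: finite_induct) (simp_all add: Tbr_zero_l Tbr_add_l)

lemma Tbr_sum_r: "finite A \<Longrightarrow> Tbr y (\<lambda>w. \<Sum>a\<in>A. f a w) = (\<lambda>w. \<Sum>a\<in>A. Tbr y (f a) w)"
  by (induction A rule: finite_induct) (simp_all add: Tbr_zero_r Tbr_add_r)

fun ev :: "magma \<Rightarrow> nat list \<Rightarrow> 'k::field" where
  "ev (Gen k) = (\<lambda>w. if w = [k] then 1 else 0)"
| "ev (Mul a b) = Tbr (ev a) (ev b)"

definition evl :: "(magma \<Rightarrow> 'k) \<Rightarrow> nat list \<Rightarrow> 'k::field" where
  "evl p = (\<lambda>w. \<Sum>t\<in>{t. p t \<noteq> 0}. p t * ev t w)"

lemma evl_sup: "finite F \<Longrightarrow> {t. p t \<noteq> 0} \<subseteq> F \<Longrightarrow> evl p w = (\<Sum>t\<in>F. p t * ev t w)"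
  unfolding evl_def by (rule sum.mono_neutral_left) auto

lemma evl_hom: "hom (free_mag g) TA (evl :: (magma \<Rightarrow> 'k::field) \<Rightarrow> _)"
  unfolding hom_def
proof (intro conjI ballI allI)
  show "evl (la_zero (free_mag g)) = (la_zero TA :: nat list \<Rightarrow> 'k)"
    by (simp add: free_mag_def evl_def)
next
  fix p q :: "magma \<Rightarrow> 'k" assume p: "p \<in> la_carrier (free_mag g)" and q: "q \<in> la_carrier (free_mag g)"
  have fp: "finite {t. p t \<noteq> 0}" and fq: "finite {t. q t \<noteq> 0}" using p q by (auto simp: free_mag_def)
  let ?F = "{t. p t \<noteq> 0} \<union> {t. q t \<noteq> 0}"
  have "evl (\<lambda>t. p t + q t) w = evl p w + evl q w" for w
  proof -
    have "evl (\<lambda>t. p t + q t) w = (\<Sum>t\<in>?F. (p t + q t) * ev t w)" by (rule evl_sup) (use fp fq in auto)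
    also have "\<dots> = (\<Sum>t\<in>?F. p t * ev t w) + (\<Sum>t\<in>?F. q t * ev t w)"
      by (simp add: algebra_simps sum.distrib)
    also have "\<dots> = evl p w + evl q w"
      using evl_sup[of ?F p w] evl_sup[of ?F q w] fp fq by auto
    finally show ?thesis .
  qed
  then show "evl (la_add (free_mag g) p q) = la_add TA (evl p) (evl q)"
    by (simp add: free_mag_def fun_eq_iff)
  let ?G = "(\<lambda>(a, b). Mul a b) ` ({t. p t \<noteq> 0} \<times> {t. q t \<noteq> 0})"
  have "evl (mag_mult p q) w = Tbr (evl p) (evl q) w" for w
  proof -
    have "evl (mag_mult p q) w = (\<Sum>t\<in>?G. mag_mult p q t * ev t w)"
      by (rule evl_sup) (use fp fq mag_mult_nz in fastforce)+
    also have "\<dots> = (\<Sum>(a, b)\<in>{t. p t \<noteq> 0} \<times> {t. q t \<noteq> 0}. p a * q b * Tbr (ev a) (ev b) w)"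
      by (subst sum.reindex) (auto simp: inj_on_def mag_mult_def intro!: sum.cong)
    also have "\<dots> = (\<Sum>a\<in>{t. p t \<noteq> 0}. \<Sum>b\<in>{t. q t \<noteq> 0}. p a * q b * Tbr (ev a) (ev b) w)"
      by (rule sum.cartesian_product[symmetric])
    also have "\<dots> = Tbr (evl p) (evl q) w"
      unfolding evl_def using fp fq by (simp add: Tbr_sum_l Tbr_sum_r Tbr_scale)
    finally show ?thesis .
  qed
  then show "evl (la_brk (free_mag g) p q) = la_brk TA (evl p) (evl q)"
    by (simp add: free_mag_def fun_eq_iff)
next
  fix a :: 'k and p :: "magma \<Rightarrow> 'k" assume p: "p \<in> la_carrier (free_mag g)"
  have fp: "finite {t. p t \<noteq> 0}" using p by (auto simp: free_mag_def)
  have "evl (\<lambda>t. a * p t) w = a * evl p w" for w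
  proof -
    have "evl (\<lambda>t. a * p t) w = (\<Sum>t\<in>{t. p t \<noteq> 0}. a * p t * ev t w)" by (rule evl_sup) (use fp in auto)
    then show ?thesis by (simp add: evl_def sum_distrib_left mult.assoc)
  qed
  then show "evl (la_smult (free_mag g) a p) = la_smult TA a (evl p)"
    by (simp add: free_mag_def fun_eq_iff)
qed simp


lemma pre_subspace:
  assumes V: "vsb L" and f: "hom L T f" and W: "lsubspace T W"
  shows "lsubspace L {x \<in> la_carrier L. f x \<in> W}"
proof -
  interpret vsb L by (rule V)
  note h = homD[OF f]
  show ?thesis unfolding lsubspace_def
    using W h(2) unfolding lsubspace_def by (auto simp: h(3) h(4))
qed

lemma kernel_ideal:
  assumes V: "vsb L" and f: "hom L TA f"
  shows "lideal L {x \<in> la_carrier L. f x = (\<lambda>w. 0)}"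
proof -
  interpret vsb L by (rule V)
  note h = homD[OF f]
  have "lsubspace L {x \<in> la_carrier L. f x \<in> {\<lambda>w. 0}}"
    by (rule pre_subspace[OF V f]) (simp add: lsubspace_def fun_eq_iff)
  then show ?thesis unfolding lideal_def by (auto simp: h(5) Tbr_zero_l Tbr_zero_r)
qed

definition Sk :: "nat \<Rightarrow> (nat list \<Rightarrow> 'k::field) set" where
  "Sk k = {t. \<forall>w. (k \<ge> 2 \<and> (length w < k \<or> length w \<notin> {1, 2, 3})) \<longrightarrow> t w = 0}"

lemma Sk_subspace: "lsubspace TA (Sk k)"
  by (simp add: lsubspace_def Sk_def)

lemma Tbr_Sk: assumes n: "n \<ge> 1" and y: "y \<in> Sk n" shows "Tbr x y \<in> Sk (Suc n)"
  unfolding Sk_def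
proof (intro CollectI allI impI)
  fix w :: "nat list" assume a: "2 \<le> Suc n \<and> (length w < Suc n \<or> length w \<notin> {1, 2, 3})"
  have y0: "\<And>w. length w < n \<Longrightarrow> length w \<ge> 1 \<Longrightarrow> y w = 0" using y unfolding Sk_def by auto
  show "Tbr x y w = 0"
  proof (rule list_len_cases[of w])
    fix i j assume "w = [i, j]" then show ?thesis using a y0[of "[i]"] y0[of "[j]"] by auto
  next
    fix k i j assume "w = [k, i, j]"
    then show ?thesis using a y0[of "[i]"] y0[of "[k]"] y0[of "[i, j]"] y0[of "[k, j]"] by auto
  qed (auto simp: Tbr_len)
qed

lemma Tbr_Sk2: assumes "x \<in> Sk 2" "y \<in> Sk 2" shows "Tbr x y = (\<lambda>w. 0)"
proof -
  have x0: "\<And>i. x [i] = 0" and y0: "\<And>i. y [i] = 0" using assms unfolding Sk_def by auto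
  show ?thesis by (rule Tbr_ext) (auto simp: x0 y0 Tbr_len)
qed

lemma Sk_big: "k \<ge> 4 \<Longrightarrow> t \<in> Sk k \<Longrightarrow> t = (\<lambda>w. 0)"
  unfolding Sk_def by (auto simp: fun_eq_iff)

lemma lcs_Sk:
  assumes Lie: "liealg L" and f: "hom L TA f"
  shows "x \<in> lcs L k \<Longrightarrow> f x \<in> Sk k"
proof (induction k arbitrary: x)
  case 0 then show ?case by (simp add: Sk_def)
next
  case (Suc n)
  interpret liealg L by (rule Lie)
  note h = homD[OF f]
  show ?case
  proof (cases "n = 0")
    case True then show ?thesis by (simp add: Sk_def)
  next
    case False
    have "brset L C (lcs L n) \<subseteq> {x \<in> C. f x \<in> Sk (Suc n)}"
      unfolding brset_def
    proof (rule lspan_least)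
      show "lsubspace L {x \<in> C. f x \<in> Sk (Suc n)}" by (rule pre_subspace[OF vsb_axioms f Sk_subspace])
      show "{bk a b |a b. a \<in> C \<and> b \<in> lcs L n} \<subseteq> {x \<in> C. f x \<in> Sk (Suc n)}"
      proof
        fix z assume "z \<in> {bk a b |a b. a \<in> C \<and> b \<in> lcs L n}"
        then obtain a b where ab: "z = bk a b" "a \<in> C" "b \<in> lcs L n" by blast
        have bC: "b \<in> C" using ab lcs_sub by (auto dest: subsetD)
        have "f (bk a b) = Tbr (f a) (f b)" using h(5)[OF ab(2) bC] by simp
        moreover have "Tbr (f a) (f b) \<in> Sk (Suc n)" using Tbr_Sk[OF _ Suc.IH[OF ab(3)]] False by simp
        ultimately show "z \<in> {x \<in> C. f x \<in> Sk (Suc n)}" using ab bC by simp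
      qed
    qed
    then show ?thesis using Suc.prems False by auto
  qed
qed

definition "I1 g = ideal_gen (free_mag g) (lie_relations g)"
definition "I2 g c = lcs (free_lie g) (c + 1)"
definition "I3 g c = brset (F_gc g c) (lcs (F_gc g c) 2) (lcs (F_gc g c) 2)"
definition "hM x = evl (rep (rep (rep x)))"
definition "PP g c p = coset (F_gc g c) (I3 g c) (coset (free_lie g) (I2 g c) (coset (free_mag g) (I1 g) p))"
definition "P2 g c p = coset (free_lie g) (I2 g c) (coset (free_mag g) (I1 g) p)"

lemma free_lie_eq: "free_lie g = quot (free_mag g) (I1 g)"
  by (simp add: free_lie_def I1_def)
lemma F_eq: "F_gc g c = quot (free_lie g) (I2 g c)"
  by (simp add: F_gc_def I2_def)
lemma M_eq: "M_gc g c = quot (F_gc g c) (I3 g c)"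
  by (simp add: M_gc_def I3_def Let_def)

lemma I1_ideal: "lideal (free_mag g) (I1 g :: (magma \<Rightarrow> 'k::field) set)"
  unfolding I1_def by (rule vsb.ideal_gen_lideal[OF free_mag_vsb lie_relations_sub])
lemma I2_ideal: "lideal (free_lie g) (I2 g c :: (magma \<Rightarrow> 'k::field) set set)"
  unfolding I2_def by (rule liealg.lcs_ideal[OF free_lie_lie])
lemma I3_ideal: "lideal (F_gc g c) (I3 g c :: (magma \<Rightarrow> 'k::field) set set set)"
  unfolding I3_def by (rule liealg.metab_ideal[OF F_lie])

lemma TA_vsb: "vsb TA"
  using TA_lie liealg.axioms(1) by blast

lemma h1_hom: "hom (free_lie g) TA (\<lambda>X. evl (rep X) :: nat list \<Rightarrow> 'k::field)"
  and h1_eq: "p \<in> la_carrier (free_mag g) \<Longrightarrow> evl (rep (coset (free_mag g) (I1 g) p)) = (evl p :: nat list \<Rightarrow> 'k::field)"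
proof -
  let ?L = "free_mag g :: (magma \<Rightarrow> 'k::field, 'k) lie_alg"
  interpret vsb ?L by (rule free_mag_vsb)
  interpret T: liealg "TA :: (nat list \<Rightarrow> 'k, 'k) lie_alg" by (rule TA_lie)
  note h = homD[OF evl_hom[of g]]
  have K: "lideal ?L {x \<in> C. evl x = (\<lambda>w. 0)}" by (rule kernel_ideal[OF vsb_axioms evl_hom])
  have "lie_relations g \<subseteq> {x \<in> C. evl x = (\<lambda>w. 0 :: 'k)}"
  proof
    fix r :: "magma \<Rightarrow> 'k" assume r: "r \<in> lie_relations g"
    then have rC: "r \<in> C" using lie_relations_sub by blast
    from r consider (a) p where "p \<in> C" "r = bk p p"
      | (b) p q s where "p \<in> C" "q \<in> C" "s \<in> C" "r = ad (ad (bk p (bk q s)) (bk q (bk s p))) (bk s (bk p q))"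
      unfolding lie_relations_def Let_def by blast
    then have "evl r = (\<lambda>w. 0 :: 'k)"
    proof cases
      case a then show ?thesis using h(5)[of p p] T.alt[of "evl p"] by simp
    next
      case b then show ?thesis using T.jac[of "evl p" "evl q" "evl s"] by (simp add: h)
    qed
    then show "r \<in> {x \<in> C. evl x = (\<lambda>w. 0)}" using rC by simp
  qed
  then have I: "I1 g \<subseteq> {x \<in> C. evl x = (\<lambda>w. 0 :: 'k)}"
    unfolding I1_def by (rule ideal_gen_least[OF K])
  have k: "\<And>i. i \<in> I1 g \<Longrightarrow> evl i = la_zero (TA :: (nat list \<Rightarrow> 'k, 'k) lie_alg)" using I by auto
  show "hom (free_lie g) TA (\<lambda>X. evl (rep X) :: nat list \<Rightarrow> 'k)"
    unfolding free_lie_eq by (rule factor(1)[OF I1_ideal TA_vsb evl_hom k])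
  show "p \<in> la_carrier (free_mag g) \<Longrightarrow> evl (rep (coset (free_mag g) (I1 g) p)) = (evl p :: nat list \<Rightarrow> 'k)"
    by (rule factor(2)[OF I1_ideal TA_vsb evl_hom k])
qed

lemma h2_hom: "c \<ge> 3 \<Longrightarrow> hom (F_gc g c) TA (\<lambda>X. evl (rep (rep X)) :: nat list \<Rightarrow> 'k::field)"
  and h2_eq: "c \<ge> 3 \<Longrightarrow> X \<in> la_carrier (free_lie g) \<Longrightarrow>
     evl (rep (rep (coset (free_lie g) (I2 g c) X))) = (evl (rep X) :: nat list \<Rightarrow> 'k::field)"
proof -
  assume c: "c \<ge> 3"
  have k: "\<And>i. i \<in> I2 g c \<Longrightarrow> evl (rep i) = la_zero (TA :: (nat list \<Rightarrow> 'k, 'k) lie_alg)"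
  proof -
    fix i :: "(magma \<Rightarrow> 'k) set" assume "i \<in> I2 g c"
    then have "evl (rep i) \<in> (Sk (c + 1) :: (nat list \<Rightarrow> 'k) set)"
      unfolding I2_def by (rule lcs_Sk[OF free_lie_lie h1_hom])
    then show "evl (rep i) = la_zero (TA :: (nat list \<Rightarrow> 'k, 'k) lie_alg)" using Sk_big[of "c+1"] c by simp
  qed
  interpret vsb "free_lie g :: ((magma \<Rightarrow> 'k) set, 'k) lie_alg" using free_lie_lie liealg.axioms(1) by blast
  show "hom (F_gc g c) TA (\<lambda>X. evl (rep (rep X)) :: nat list \<Rightarrow> 'k)"
    unfolding F_eq by (rule factor(1)[OF I2_ideal TA_vsb h1_hom k])
  show "X \<in> la_carrier (free_lie g) \<Longrightarrow>
     evl (rep (rep (coset (free_lie g) (I2 g c) X))) = (evl (rep X) :: nat list \<Rightarrow> 'k)"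
    by (rule factor(2)[OF I2_ideal TA_vsb h1_hom k])
qed


lemma h3_hom: "c \<ge> 3 \<Longrightarrow> hom (M_gc g c) TA (hM :: _ \<Rightarrow> nat list \<Rightarrow> 'k::field)"
  and h3_eq: "c \<ge> 3 \<Longrightarrow> X \<in> la_carrier (F_gc g c) \<Longrightarrow>
     hM (coset (F_gc g c) (I3 g c) X) = (evl (rep (rep X)) :: nat list \<Rightarrow> 'k::field)"
proof -
  assume c: "c \<ge> 3"
  let ?F = "F_gc g c :: ((magma \<Rightarrow> 'k) set set, 'k) lie_alg"
  interpret liealg ?F by (rule F_lie)
  note h = homD[OF h2_hom[OF c]]
  have D: "\<And>x. x \<in> lcs ?F 2 \<Longrightarrow> evl (rep (rep x)) \<in> (Sk 2 :: (nat list \<Rightarrow> 'k) set)"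
    by (rule lcs_Sk[OF F_lie h2_hom[OF c]])
  have "I3 g c \<subseteq> {x \<in> C. evl (rep (rep x)) \<in> {\<lambda>w. 0 :: 'k}}"
    unfolding I3_def brset_def
  proof (rule lspan_least)
    show "lsubspace ?F {x \<in> C. evl (rep (rep x)) \<in> {\<lambda>w. 0 :: 'k}}"
      by (rule pre_subspace[OF vsb_axioms h2_hom[OF c]]) (simp add: lsubspace_def fun_eq_iff)
    show "{bk a b |a b. a \<in> lcs ?F 2 \<and> b \<in> lcs ?F 2} \<subseteq> {x \<in> C. evl (rep (rep x)) \<in> {\<lambda>w. 0 :: 'k}}"
    proof
      fix z assume "z \<in> {bk a b |a b. a \<in> lcs ?F 2 \<and> b \<in> lcs ?F 2}"
      then obtain a b where ab: "z = bk a b" "a \<in> lcs ?F 2" "b \<in> lcs ?F 2" by blast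
      have aC: "a \<in> C" and bC: "b \<in> C" using ab lcs_sub by (auto dest: subsetD)
      have "evl (rep (rep z)) = Tbr (evl (rep (rep a))) (evl (rep (rep b)))" using h(5)[OF aC bC] ab by simp
      also have "\<dots> = (\<lambda>w. 0)" by (rule Tbr_Sk2[OF D[OF ab(2)] D[OF ab(3)]])
      finally show "z \<in> {x \<in> C. evl (rep (rep x)) \<in> {\<lambda>w. 0 :: 'k}}" using ab aC bC by simp
    qed
  qed
  then have k: "\<And>i. i \<in> I3 g c \<Longrightarrow> evl (rep (rep i)) = la_zero (TA :: (nat list \<Rightarrow> 'k, 'k) lie_alg)"
    by (simp add: subset_iff)
  show "hom (M_gc g c) TA (hM :: _ \<Rightarrow> nat list \<Rightarrow> 'k)"
    unfolding M_eq hM_def by (rule factor(1)[OF I3_ideal TA_vsb h2_hom[OF c] k])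
  show "X \<in> la_carrier (F_gc g c) \<Longrightarrow> hM (coset (F_gc g c) (I3 g c) X) = (evl (rep (rep X)) :: nat list \<Rightarrow> 'k)"
    unfolding hM_def by (rule factor(2)[OF I3_ideal TA_vsb h2_hom[OF c] k])
qed


definition delta :: "magma \<Rightarrow> magma \<Rightarrow> 'k::field" where
  "delta t = (\<lambda>s. if s = t then 1 else 0)"

lemma delta_C: "mgens t \<subseteq> {..<g} \<Longrightarrow> (delta t :: magma \<Rightarrow> 'k::field) \<in> la_carrier (free_mag g)"
  by (simp add: free_mag_def delta_def)

lemma delta_mul: "delta (Mul a b) = mag_mult (delta a) (delta b)"
  by (auto simp: delta_def mag_mult_def fun_eq_iff split: magma.split)

lemma supp_induct:
  assumes W: "lsubspace (free_mag g) W"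
  shows "finite S \<Longrightarrow> \<forall>p. {t. p t \<noteq> 0} = S \<longrightarrow> p \<in> la_carrier (free_mag g) \<longrightarrow>
     (\<forall>t\<in>S. (delta t :: magma \<Rightarrow> 'k::field) \<in> W) \<longrightarrow> p \<in> W"
proof (induction S rule: finite_induct)
  case empty
  have z: "la_zero (free_mag g) \<in> W" by (rule vsb.subspace_zero[OF free_mag_vsb W])
  show ?case
  proof (intro allI impI)
    fix p :: "magma \<Rightarrow> 'k" assume "{t. p t \<noteq> 0} = {}"
    then have "p = la_zero (free_mag g)" by (auto simp: free_mag_def fun_eq_iff)
    then show "p \<in> W" using z by simp
  qed
next
  case (insert s S)
  show ?case
  proof (intro allI impI)
    fix p :: "magma \<Rightarrow> 'k" assume sp: "{t. p t \<noteq> 0} = insert s S" and pC: "p \<in> la_carrier (free_mag g)"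
      and d: "\<forall>t\<in>insert s S. delta t \<in> W"
    let ?p' = "p(s := 0)"
    have s1: "{t. ?p' t \<noteq> 0} = S" using sp insert.hyps(2) by auto
    have s2: "?p' \<in> la_carrier (free_mag g)"
    proof -
      have "{t. ?p' t \<noteq> 0} \<subseteq> {t. p t \<noteq> 0}" by auto
      then show ?thesis using pC unfolding free_mag_carrier by (auto intro: finite_subset)
    qed
    have s3: "\<forall>t\<in>S. delta t \<in> W" using d by simp
    have "?p' \<in> W" using insert.IH s1 s2 s3 by blast
    moreover have "la_smult (free_mag g) (p s) (delta s) \<in> W"
      by (rule vsb.subspace_smult[OF free_mag_vsb W]) (use d in simp)
    ultimately have "la_add (free_mag g) (la_smult (free_mag g) (p s) (delta s)) ?p' \<in> W"
      by (intro vsb.subspace_add[OF free_mag_vsb W])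
    moreover have "la_add (free_mag g) (la_smult (free_mag g) (p s) (delta s)) ?p' = p"
      by (simp add: free_mag_def delta_def fun_eq_iff)
    ultimately show "p \<in> W" by simp
  qed
qed

lemma supp_induct':
  assumes W: "lsubspace (free_mag g) W" and p: "p \<in> la_carrier (free_mag g)"
    and d: "\<And>t. p t \<noteq> 0 \<Longrightarrow> (delta t :: magma \<Rightarrow> 'k::field) \<in> W"
  shows "p \<in> W"
proof -
  have f: "finite {t. p t \<noteq> 0}" using p by (simp add: free_mag_def)
  show ?thesis using supp_induct[OF W f] p d by blast
qed

lemma evl_delta: "evl (delta t) = ev t"
proof
  fix w
  have "{s. (delta t :: magma \<Rightarrow> 'a) s \<noteq> 0} = {t}" by (auto simp: delta_def)
  then show "evl (delta t) w = (ev t w :: 'a::field)" by (simp add: evl_def delta_def)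
qed

lemma ev1: "ev t [k] = (if t = Gen k then 1 else 0)"
  by (cases t) auto

lemma evl_gen: "p \<in> la_carrier (free_mag g) \<Longrightarrow> evl p [k] = (p (Gen k) :: 'k::field)"
proof -
  assume p: "p \<in> la_carrier (free_mag g)"
  have f: "finite {t. p t \<noteq> 0}" using p by (simp add: free_mag_def)
  have "evl p [k] = (\<Sum>t\<in>{t. p t \<noteq> 0}. if t = Gen k then p t else 0)"
    unfolding evl_def by (rule sum.cong) (auto simp: ev1)
  also have "\<dots> = p (Gen k)" using f by (simp add: sum.delta')
  finally show ?thesis .
qed

lemma PP_hom: "hom (free_mag g) (M_gc g c) (PP g c :: _ \<Rightarrow> (magma \<Rightarrow> 'k::field) set set set)"
  and PP_surj: "PP g c ` la_carrier (free_mag g) = la_carrier (M_gc g c :: ((magma \<Rightarrow> 'k::field) set set set, 'k) lie_alg)"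
  and P2_hom: "hom (free_mag g) (F_gc g c) (P2 g c :: _ \<Rightarrow> (magma \<Rightarrow> 'k::field) set set)"
  and PP_P2: "PP g c p = coset (F_gc g c) (I3 g c) (P2 g c p)"
proof -
  have v1: "vsb (free_mag g :: (magma \<Rightarrow> 'k, 'k) lie_alg)" by (rule free_mag_vsb)
  have v2: "vsb (free_lie g :: ((magma \<Rightarrow> 'k) set, 'k) lie_alg)" using free_lie_lie liealg.axioms(1) by blast
  have v3: "vsb (F_gc g c :: ((magma \<Rightarrow> 'k) set set, 'k) lie_alg)" using F_lie liealg.axioms(1) by blast
  note a1 = vsb.quot_hom[OF v1 I1_ideal, folded free_lie_eq]
  note a2 = vsb.quot_hom[OF v2 I2_ideal[of g c], folded F_eq]
  note a3 = vsb.quot_hom[OF v3 I3_ideal[of g c], folded M_eq]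
  have e: "PP g c = coset (F_gc g c) (I3 g c) \<circ> (coset (free_lie g) (I2 g c) \<circ> coset (free_mag g) (I1 g))"
    by (simp add: PP_def fun_eq_iff)
  show "hom (free_mag g) (M_gc g c) (PP g c :: _ \<Rightarrow> (magma \<Rightarrow> 'k::field) set set set)"
    unfolding e by (rule hom_comp[OF hom_comp[OF a1(1) a2(1)] a3(1)])
  show "PP g c ` la_carrier (free_mag g) = la_carrier (M_gc g c :: ((magma \<Rightarrow> 'k::field) set set set, 'k) lie_alg)"
    unfolding e image_comp[symmetric] using a1(2) a2(2) a3(2) by simp
  show "hom (free_mag g) (F_gc g c) (P2 g c :: _ \<Rightarrow> (magma \<Rightarrow> 'k::field) set set)"
  proof -
    have "(P2 g c :: (magma \<Rightarrow> 'k) \<Rightarrow> _) = coset (free_lie g) (I2 g c) \<circ> coset (free_mag g) (I1 g)" by (simp add: P2_def fun_eq_iff)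
    then show ?thesis using hom_comp[OF a1(1) a2(1)] by simp
  qed
  show "PP g c p = coset (F_gc g c) (I3 g c) (P2 g c p)" by (simp add: PP_def P2_def)
qed

lemma hM_PP: "c \<ge> 3 \<Longrightarrow> p \<in> la_carrier (free_mag g) \<Longrightarrow> hM (PP g c p) = (evl p :: nat list \<Rightarrow> 'k::field)"
proof -
  assume c: "c \<ge> 3" and p: "p \<in> la_carrier (free_mag g)"
  have v1: "vsb (free_mag g :: (magma \<Rightarrow> 'k, 'k) lie_alg)" by (rule free_mag_vsb)
  have v2: "vsb (free_lie g :: ((magma \<Rightarrow> 'k) set, 'k) lie_alg)" using free_lie_lie liealg.axioms(1) by blast
  note a1 = vsb.quot_hom[OF v1 I1_ideal, folded free_lie_eq]
  note a2 = vsb.quot_hom[OF v2 I2_ideal[of g c], folded F_eq]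
  have x1: "coset (free_mag g) (I1 g) p \<in> la_carrier (free_lie g)" using homD(1)[OF a1(1) p] .
  have x2: "coset (free_lie g) (I2 g c) (coset (free_mag g) (I1 g) p) \<in> la_carrier (F_gc g c)"
    using homD(1)[OF a2(1) x1] .
  show ?thesis unfolding PP_def using h3_eq[OF c x2] h2_eq[OF c x1] h1_eq[OF p] by simp
qed

lemma decomp:
  assumes p: "p \<in> la_carrier (free_mag g)" and z: "\<And>k. p (Gen k) = (0 :: 'k::field)"
  shows "P2 g c p \<in> lcs (F_gc g c) 2"
proof -
  let ?F = "F_gc g c :: ((magma \<Rightarrow> 'k) set set, 'k) lie_alg"
  interpret F: liealg ?F by (rule F_lie)
  note h = homD[OF P2_hom[of g c]]
  have W: "lsubspace (free_mag g) {x \<in> la_carrier (free_mag g). P2 g c x \<in> lcs ?F 2}"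
    by (rule pre_subspace[OF free_mag_vsb P2_hom]) (simp add: F.lcs2 F.brset_subspace)
  have "p \<in> {x \<in> la_carrier (free_mag g). P2 g c x \<in> lcs ?F 2}"
  proof (rule supp_induct'[OF W p])
    fix t assume t: "p t \<noteq> 0"
    then have mg: "mgens t \<subseteq> {..<g}" using p by (simp add: free_mag_def)
    obtain a b where ab: "t = Mul a b" using t z by (cases t) auto
    have aC: "(delta a :: magma \<Rightarrow> 'k) \<in> la_carrier (free_mag g)" and bC: "(delta b :: magma \<Rightarrow> 'k) \<in> la_carrier (free_mag g)"
      using mg ab by (auto intro!: delta_C)
    have "P2 g c (delta t) = la_brk ?F (P2 g c (delta a)) (P2 g c (delta b))"
      using h(5)[OF aC bC] ab by (simp add: delta_mul free_mag_def)
    moreover have "\<dots> \<in> lcs ?F 2" unfolding F.lcs2 by (rule F.brset_inc) (use h(1) aC bC in auto)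
    moreover have "(delta t :: magma \<Rightarrow> 'k) \<in> la_carrier (free_mag g)" using mg by (rule delta_C)
    ultimately show "delta t \<in> {x \<in> la_carrier (free_mag g). P2 g c x \<in> lcs ?F 2}" by simp
  qed
  then show ?thesis by simp
qed

lemma M_abelian:
  assumes c: "c \<ge> 3"
    and x: "x \<in> la_carrier (M_gc g c :: ((magma \<Rightarrow> 'k::field) set set set, 'k) lie_alg)"
    and y: "y \<in> la_carrier (M_gc g c :: ((magma \<Rightarrow> 'k::field) set set set, 'k) lie_alg)"
    and hx: "\<And>k. hM x [k] = (0::'k)" and hy: "\<And>k. hM y [k] = (0::'k)"
  shows "la_brk (M_gc g c) x y = la_zero (M_gc g c)"
proof -
  let ?F = "F_gc g c :: ((magma \<Rightarrow> 'k) set set, 'k) lie_alg"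
  interpret F: liealg ?F by (rule F_lie)
  have "x \<in> PP g c ` la_carrier (free_mag g)" unfolding PP_surj by (rule x)
  then obtain p where p: "p \<in> la_carrier (free_mag g)" "x = PP g c p" by blast
  have "y \<in> PP g c ` la_carrier (free_mag g)" unfolding PP_surj by (rule y)
  then obtain q where q: "q \<in> la_carrier (free_mag g)" "y = PP g c q" by blast
  have p0: "p (Gen k) = 0" for k using hx[of k] hM_PP[OF c p(1)] evl_gen[OF p(1), of k] p(2) by simp
  have q0: "q (Gen k) = 0" for k using hy[of k] hM_PP[OF c q(1)] evl_gen[OF q(1), of k] q(2) by simp
  have a: "P2 g c p \<in> lcs ?F 2" by (rule decomp[OF p(1) p0])
  have b: "P2 g c q \<in> lcs ?F 2" by (rule decomp[OF q(1) q0])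
  have aC: "P2 g c p \<in> la_carrier ?F" and bC: "P2 g c q \<in> la_carrier ?F"
    using a b F.lcs_sub by (auto dest: subsetD)
  note q3 = homD[OF F.quot_hom(1)[OF I3_ideal, folded M_eq]]
  have "la_brk (M_gc g c) x y = coset ?F (I3 g c) (la_brk ?F (P2 g c p) (P2 g c q))"
    using p q q3(5)[OF aC bC] by (simp add: PP_P2)
  also have "\<dots> = la_zero (M_gc g c)"
  proof -
    have "la_brk ?F (P2 g c p) (P2 g c q) \<in> I3 g c" unfolding I3_def by (rule F.brset_inc[OF a b])
    then show ?thesis using F.quot_zero_iff[OF I3_ideal, of "la_brk ?F (P2 g c p) (P2 g c q)"] aC bC by (simp add: M_eq)
  qed
  finally show ?thesis .
qed

lemma hM_big:
  assumes c: "c \<ge> 3" and x: "x \<in> la_carrier (M_gc g c :: ((magma \<Rightarrow> 'k::field) set set set, 'k) lie_alg)"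
    and k: "k \<ge> g"
  shows "hM x [k] = (0::'k)"
proof -
  have "x \<in> PP g c ` la_carrier (free_mag g)" unfolding PP_surj by (rule x)
  then obtain p where p: "p \<in> la_carrier (free_mag g)" "x = PP g c p" by blast
  have "p (Gen k) = 0" using p(1) k by (auto simp: free_mag_def)
  then show ?thesis using hM_PP[OF c p(1)] evl_gen[OF p(1)] p(2) by simp
qed



context vsb
begin

lemma lincomb_Nil[simp]: "lincomb L c [] = z0"
  by (simp add: lincomb_def)

lemma lincomb_Cons[simp]: "lincomb L c (x # xs) = ad (sm (c x) x) (lincomb L c xs)"
  by (simp add: lincomb_def)

lemma lincomb_C[simp]: "set xs \<subseteq> C \<Longrightarrow> lincomb L c xs \<in> C"
  by (induction xs) auto

lemma lincomb_subspace: "lsubspace L W \<Longrightarrow> set xs \<subseteq> W \<Longrightarrow> lincomb L c xs \<in> W"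
  by (induction xs) (auto intro: subspace_add subspace_smult subspace_zero)

lemma lincomb_append: "set xs \<subseteq> C \<Longrightarrow> set ys \<subseteq> C \<Longrightarrow>
    lincomb L c (xs @ ys) = ad (lincomb L c xs) (lincomb L c ys)"
  by (induction xs) (auto simp: add_assoc)

lemma lincomb_zero: "set xs \<subseteq> C \<Longrightarrow> (\<forall>x\<in>set xs. c x = 0) \<Longrightarrow> lincomb L c xs = z0"
  by (induction xs) auto

lemma lincomb_cong: "(\<forall>x\<in>set xs. c x = d x) \<Longrightarrow> lincomb L c xs = lincomb L d xs"
  by (induction xs) auto

lemma lincomb_remove1: "distinct xs \<Longrightarrow> x \<in> set xs \<Longrightarrow> set xs \<subseteq> C \<Longrightarrow>
    lincomb L c xs = ad (sm (c x) x) (lincomb L c (remove1 x xs))"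
proof (induction xs)
  case Nil then show ?case by simp
next
  case (Cons y xs)
  show ?case
  proof (cases "y = x")
    case True then show ?thesis by simp
  next
    case False
    then have x: "x \<in> set xs" using Cons.prems by simp
    have "lincomb L c (y # xs) = ad (sm (c y) y) (ad (sm (c x) x) (lincomb L c (remove1 x xs)))"
      using Cons x by simp
    also have "\<dots> = ad (sm (c x) x) (ad (sm (c y) y) (lincomb L c (remove1 x xs)))"
    proof (rule add_lcomm)
      have "set (remove1 x xs) \<subseteq> C" using Cons.prems set_remove1_subset[of x xs] by auto
      then show "lincomb L c (remove1 x xs) \<in> C" by (rule lincomb_C)
    qed (use Cons.prems x in auto)
    finally show ?thesis using False by simp
  qed
qed

lemma lincomb_map:
  assumes x0: "x0 \<in> C" and zs: "set zs \<subseteq> C"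
  shows "lincomb L c (map (\<lambda>z. ad z (sm (mu z) x0)) zs) =
     ad (lincomb L (\<lambda>z. c (ad z (sm (mu z) x0))) zs) (sm (sum_list (map (\<lambda>z. c (ad z (sm (mu z) x0)) * mu z) zs)) x0)"
  using zs
proof (induction zs)
  case Nil then show ?case using x0 by simp
next
  case (Cons z zs)
  let ?f = "\<lambda>z. ad z (sm (mu z) x0)"
  let ?R = "lincomb L (\<lambda>z. c (?f z)) zs"
  let ?s = "sum_list (map (\<lambda>z. c (?f z) * mu z) zs)"
  have z: "z \<in> C" and zsC: "set zs \<subseteq> C" using Cons.prems by auto
  have R: "?R \<in> C" using zsC by simp
  have "lincomb L c (map ?f (z # zs)) = ad (sm (c (?f z)) (?f z)) (ad ?R (sm ?s x0))"
    using Cons.IH zsC by simp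
  also have "sm (c (?f z)) (?f z) = ad (sm (c (?f z)) z) (sm (c (?f z) * mu z) x0)"
    using z x0 by (simp add: smult_add mult_smult)
  also have "ad (ad (sm (c (?f z)) z) (sm (c (?f z) * mu z) x0)) (ad ?R (sm ?s x0))
     = ad (ad (sm (c (?f z)) z) ?R) (ad (sm (c (?f z) * mu z) x0) (sm ?s x0))"
    using z x0 R by (simp add: add_assoc add_lcomm)
  also have "ad (sm (c (?f z) * mu z) x0) (sm ?s x0) = sm (c (?f z) * mu z + ?s) x0"
    using x0 by (simp add: add_smult)
  finally show ?case by simp
qed

lemma lin_indepD: "lin_indep L xs \<Longrightarrow> lincomb L c xs = z0 \<Longrightarrow> x \<in> set xs \<Longrightarrow> c x = 0"
  unfolding lin_indep_def by blast

lemma elim1: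
  assumes ind: "lin_indep L xs" and W: "lsubspace L W" and xsW: "set xs \<subseteq> W"
    and la_add: "\<And>x y. x \<in> C \<Longrightarrow> y \<in> C \<Longrightarrow> lam (ad x y) = lam x + lam y"
    and la_sm: "\<And>a x. x \<in> C \<Longrightarrow> lam (sm a x) = a * lam x"
  shows "\<exists>ys. lin_indep L ys \<and> length xs \<le> length ys + 1 \<and> set ys \<subseteq> W \<and> (\<forall>y\<in>set ys. lam y = 0)"
proof (cases "\<forall>x\<in>set xs. lam x = 0")
  case True then show ?thesis using ind xsW by (intro exI[of _ xs]) auto
next
  case False
  then obtain x0 where x0: "x0 \<in> set xs" "lam x0 \<noteq> 0" by blast
  have dxs: "distinct xs" and xsC: "set xs \<subseteq> C" using ind unfolding lin_indep_def by auto
  have WC: "W \<subseteq> C" by (rule subspace_sub[OF W])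
  have x0C: "x0 \<in> C" using x0 xsC by auto
  define zs where "zs = remove1 x0 xs"
  define mu where "mu z = - (lam z / lam x0)" for z
  define f where "f z = ad z (sm (mu z) x0)" for z
  have zsC: "set zs \<subseteq> C" using xsC set_remove1_subset[of x0 xs] unfolding zs_def by auto
  have x0zs: "x0 \<notin> set zs" using dxs unfolding zs_def by simp
  have dzs: "distinct zs" using dxs unfolding zs_def by simp
  have fC: "\<And>z. z \<in> set zs \<Longrightarrow> f z \<in> C" using zsC x0C unfolding f_def by auto
  have lamf: "\<And>z. z \<in> set zs \<Longrightarrow> lam (f z) = 0"
  proof -
    fix z assume "z \<in> set zs"
    then have z: "z \<in> C" using zsC by auto
    have "lam (f z) = lam z + mu z * lam x0" unfolding f_def using z x0C by (simp add: la_add la_sm)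
    then show "lam (f z) = 0" using x0(2) unfolding mu_def by simp
  qed
  have key: "lincomb L c (map f zs) = lincomb L (\<lambda>x. if x = x0 then sum_list (map (\<lambda>z. c (f z) * mu z) zs) else c (f x)) xs"
    for c
  proof -
    let ?d = "\<lambda>x. if x = x0 then sum_list (map (\<lambda>z. c (f z) * mu z) zs) else c (f x)"
    have "lincomb L ?d xs = ad (sm (sum_list (map (\<lambda>z. c (f z) * mu z) zs)) x0) (lincomb L ?d zs)"
      using lincomb_remove1[OF dxs x0(1) xsC, of ?d] by (simp add: zs_def[symmetric])
    also have "lincomb L ?d zs = lincomb L (\<lambda>z. c (f z)) zs"
      by (rule lincomb_cong) (use x0zs in auto)
    also have "ad (sm (sum_list (map (\<lambda>z. c (f z) * mu z) zs)) x0) (lincomb L (\<lambda>z. c (f z)) zs)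
        = lincomb L c (map f zs)"
      unfolding f_def using lincomb_map[OF x0C zsC, of c mu] zsC x0C by (simp add: add_comm)
    finally show ?thesis by simp
  qed
  have inj: "inj_on f (set zs)"
  proof (rule inj_onI, rule ccontr)
    fix z1 z2 assume z1: "z1 \<in> set zs" and z2: "z2 \<in> set zs" and e: "f z1 = f z2" and ne: "z1 \<noteq> z2"
    have z1C: "z1 \<in> C" and z2C: "z2 \<in> C" using z1 z2 zsC by auto
    have n1: "z1 \<noteq> x0" and n2: "z2 \<noteq> x0" using z1 z2 x0zs by auto
    define d where "d x = (if x = z1 then 1 else if x = z2 then -1 else if x = x0 then mu z1 - mu z2 else 0)" for x
    have z1xs: "z1 \<in> set xs" and z2xs: "z2 \<in> set xs" using z1 z2 set_remove1_subset[of x0 xs] unfolding zs_def by auto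
    have "lincomb L d xs = ad (sm (d x0) x0) (lincomb L d zs)"
      unfolding zs_def by (rule lincomb_remove1[OF dxs x0(1) xsC])
    also have "lincomb L d zs = ad (sm (d z1) z1) (lincomb L d (remove1 z1 zs))"
      by (rule lincomb_remove1[OF dzs z1 zsC])
    also have "lincomb L d (remove1 z1 zs) = ad (sm (d z2) z2) (lincomb L d (remove1 z2 (remove1 z1 zs)))"
      by (rule lincomb_remove1) (use dzs z2 ne zsC set_remove1_subset[of z1 zs] in auto)
    also have "lincomb L d (remove1 z2 (remove1 z1 zs)) = z0"
    proof (rule lincomb_zero)
      have s: "set (remove1 z2 (remove1 z1 zs)) \<subseteq> set zs"
        using set_remove1_subset[of z2 "remove1 z1 zs"] set_remove1_subset[of z1 zs] by auto
      then show "set (remove1 z2 (remove1 z1 zs)) \<subseteq> C" using zsC by auto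
      have "z1 \<notin> set (remove1 z1 zs)" using dzs by simp
      then have "z1 \<notin> set (remove1 z2 (remove1 z1 zs))" using set_remove1_subset[of z2 "remove1 z1 zs"] by blast
      moreover have "z2 \<notin> set (remove1 z2 (remove1 z1 zs))" using dzs by (simp add: distinct_remove1)
      moreover have "x0 \<notin> set (remove1 z2 (remove1 z1 zs))" using s x0zs by auto
      ultimately show "\<forall>x\<in>set (remove1 z2 (remove1 z1 zs)). d x = 0" unfolding d_def by auto
    qed
    finally have lc: "lincomb L d xs = ad (sm (mu z1 - mu z2) x0) (ad z1 (ad (sm (-1) z2) z0))"
      using n1 n2 ne z1C z2C unfolding d_def by simp
    have A: "ad (sm (mu z1 - mu z2) x0) (ad z1 (ad (sm (-1) z2) z0)) = ad (f z1) (sm (-1) (f z2))"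
    proof -
      have "ad (f z1) (sm (-1) (f z2)) = ad (ad z1 (sm (mu z1) x0)) (ad (sm (-1) z2) (sm (- mu z2) x0))"
        unfolding f_def using z2C x0C by (simp add: smult_add smult_smult)
      also have "\<dots> = ad z1 (ad (sm (-1) z2) (ad (sm (mu z1) x0) (sm (- mu z2) x0)))"
        using z1C z2C x0C by (simp add: add_assoc add_lcomm)
      also have "ad (sm (mu z1) x0) (sm (- mu z2) x0) = sm (mu z1 - mu z2) x0"
        using x0C add_smult[of x0 "mu z1" "- mu z2"] by simp
      finally show ?thesis using z1C z2C x0C add_comm[of "sm (mu z1 - mu z2) x0" "sm (-1) z2"] by (simp add: add_lcomm)
    qed
    have "lincomb L d xs = z0" using lc A e fC[OF z2] by simp
    then have "d z1 = 0" using lin_indepD[OF ind _ z1xs] by blast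
    then show False unfolding d_def by simp
  qed
  have indys: "lin_indep L (map f zs)"
    unfolding lin_indep_def
  proof (intro conjI allI impI ballI)
    show "distinct (map f zs)" using dzs inj by (simp add: distinct_map)
    show "set (map f zs) \<subseteq> C" using fC by auto
  next
    fix c y assume lc: "lincomb L c (map f zs) = z0" and y: "y \<in> set (map f zs)"
    then obtain z where z: "z \<in> set zs" "y = f z" by auto
    have zxs: "z \<in> set xs" "z \<noteq> x0" using z(1) x0zs set_remove1_subset[of x0 xs] unfolding zs_def by auto
    have "lincomb L (\<lambda>x. if x = x0 then sum_list (map (\<lambda>z. c (f z) * mu z) zs) else c (f x)) xs = z0"
      using lc key by simp
    from lin_indepD[OF ind this zxs(1)] show "c y = 0" using z zxs by simp
  qed
  show ?thesis
  proof (intro exI conjI)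
    show "lin_indep L (map f zs)" by (rule indys)
    show "length xs \<le> length (map f zs) + 1" unfolding zs_def using x0(1) by (simp add: length_remove1)
    show "set (map f zs) \<subseteq> W"
    proof
      fix y assume "y \<in> set (map f zs)"
      then obtain z where z: "z \<in> set zs" "y = f z" by auto
      have "z \<in> W" "x0 \<in> W" using z(1) xsW x0(1) set_remove1_subset[of x0 xs] unfolding zs_def by auto
      then show "y \<in> W" unfolding z(2) f_def by (intro subspace_add[OF W] subspace_smult[OF W])
    qed
    show "\<forall>y\<in>set (map f zs). lam y = 0" using lamf by auto
  qed
qed

end

lemma hom_lincomb:
  assumes V: "vsb L" and f: "hom L TA f" and xs: "set xs \<subseteq> la_carrier L"
  shows "f (lincomb L c xs) = (\<lambda>w. sum_list (map (\<lambda>x. c x * f x w) xs))"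
proof -
  interpret vsb L by (rule V)
  note h = homD[OF f]
  show ?thesis using xs by (induction xs) (auto simp: h)
qed



lemma Tbr_scale_r: "Tbr x (\<lambda>w. b * y w) = (\<lambda>w. b * Tbr x y w)"
  by (auto intro!: Tbr_ext simp: Tbr_len algebra_simps)

lemma sum_list_map_upt_delta: "k < g \<Longrightarrow> (\<Sum>k'\<leftarrow>[0..<g]. f k' * (if k = k' then 1 else 0)) = (f k :: 'a::comm_ring_1)"
proof -
  assume k: "k < g"
  have "(\<Sum>k'\<leftarrow>[0..<g]. f k' * (if k = k' then 1 else 0)) = (\<Sum>k'\<in>{0..<g}. f k' * (if k = k' then 1 else 0))"
    by (simp add: interv_sum_list_conv_sum_set_nat)
  also have "\<dots> = (\<Sum>k'\<in>{0..<g}. if k = k' then f k else 0)" by (rule sum.cong) auto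
  also have "\<dots> = f k" using k by simp
  finally show ?thesis .
qed

definition "eg g c k = PP g c (delta (Gen k))"

context
  fixes g c :: nat
  assumes c3: "c \<ge> 3"
begin


lemma MV: "vsb (M_gc g c :: ((magma \<Rightarrow> 'k::field) set set set, 'k) lie_alg)"
  using M_lie liealg.axioms(1) by blast

lemma hMh: "hom (M_gc g c :: ((magma \<Rightarrow> 'k::field) set set set, 'k) lie_alg) TA hM"
  by (rule h3_hom[OF c3])

lemma eg_C: "k < g \<Longrightarrow> (eg g c k :: (magma \<Rightarrow> 'k::field) set set set) \<in> la_carrier (M_gc g c)"
  unfolding eg_def by (rule homD(1)[OF PP_hom]) (rule delta_C, simp)

lemma hM_eg: "k < g \<Longrightarrow> hM (eg g c k :: (magma \<Rightarrow> 'k::field) set set set) = ev (Gen k)"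
  unfolding eg_def using hM_PP[OF c3 delta_C[of "Gen k" g]] by (simp add: evl_delta)

lemma hM_eg1: "k < g \<Longrightarrow> hM (eg g c k :: (magma \<Rightarrow> 'k::field) set set set) [k'] = (if k' = k then 1 else 0)"
  using fun_cong[OF hM_eg, of k "[k']"] by simp

lemma ext_gens:
  assumes ind: "lin_indep (M_gc g c :: ((magma \<Rightarrow> 'k::field) set set set, 'k) lie_alg) ys"
    and z: "\<And>y k. y \<in> set ys \<Longrightarrow> hM y [k] = (0::'k)"
  shows "lin_indep (M_gc g c :: ((magma \<Rightarrow> 'k::field) set set set, 'k) lie_alg) (ys @ map (eg g c) [0..<g])"
proof -
  interpret vsb "M_gc g c :: ((magma \<Rightarrow> 'k::field) set set set, 'k) lie_alg" by (rule MV)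
  let ?es = "map (eg g c) [0..<g] :: (magma \<Rightarrow> 'k) set set set list"
  have ysC: "set ys \<subseteq> C" and dys: "distinct ys" using ind unfolding lin_indep_def by auto
  have esC: "set ?es \<subseteq> C" using eg_C by auto
  have inj: "inj_on (eg g c :: _ \<Rightarrow> (magma \<Rightarrow> 'k) set set set) {0..<g}"
  proof (rule inj_onI)
    fix k k' assume "k \<in> {0..<g}" "k' \<in> {0..<g}" "(eg g c k :: (magma \<Rightarrow> 'k) set set set) = eg g c k'"
    then have "hM (eg g c k :: (magma \<Rightarrow> 'k) set set set) [k] = hM (eg g c k' :: (magma \<Rightarrow> 'k) set set set) [k]" by simp
    then show "k = k'" using hM_eg1[of k k, where 'k='k] hM_eg1[of k' k, where 'k='k] \<open>k \<in> {0..<g}\<close> \<open>k' \<in> {0..<g}\<close>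
      by (cases "k = k'") auto
  qed
  have disj: "set ys \<inter> set ?es = {}"
  proof (rule ccontr)
    assume "set ys \<inter> set ?es \<noteq> {}"
    then obtain k where k: "k < g" "eg g c k \<in> set ys" by auto
    then show False using z[OF k(2), of k] hM_eg1[OF k(1), of k, where 'k='k] by simp
  qed
  show ?thesis unfolding lin_indep_def
  proof (intro conjI allI impI ballI)
    show "distinct (ys @ ?es)" using dys inj disj by (simp add: distinct_map)
    show "set (ys @ ?es) \<subseteq> C" using ysC esC by auto
  next
    fix cf x assume lc: "lincomb (M_gc g c) cf (ys @ ?es) = z0" and x: "x \<in> set (ys @ ?es)"
    have h: "hM (lincomb (M_gc g c) cf (ys @ ?es)) = (\<lambda>w. sum_list (map (\<lambda>x. cf x * hM x w) (ys @ ?es)))"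
      by (rule hom_lincomb[OF MV hMh]) (use ysC esC in auto)
    have hz: "hM (z0 :: (magma \<Rightarrow> 'k) set set set) = (\<lambda>w. 0)" using homD(2)[OF hMh] by simp
    have ce: "cf (eg g c k) = 0" if k: "k < g" for k
    proof -
      have "(\<lambda>w. sum_list (map (\<lambda>x. cf x * hM x w) (ys @ ?es))) = (\<lambda>w. 0)" using h lc hz by simp
      then have "0 = sum_list (map (\<lambda>x. cf x * hM x [k]) (ys @ ?es))" using fun_cong[of _ _ "[k]"] by fastforce
      also have "sum_list (map (\<lambda>x. cf x * hM x [k]) ys) = 0"
        using dys z by (simp add: sum_list_distinct_conv_sum_set)
      then have "sum_list (map (\<lambda>x. cf x * hM x [k]) (ys @ ?es)) = sum_list (map (\<lambda>x. cf x * hM x [k]) ?es)"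
        by simp
      also have "\<dots> = (\<Sum>k'\<leftarrow>[0..<g]. cf (eg g c k') * (if k = k' then 1 else 0))"
        unfolding map_map o_def by (rule arg_cong[where f=sum_list], rule map_cong) (auto simp: hM_eg1[where 'k='k])
      also have "\<dots> = cf (eg g c k)" by (rule sum_list_map_upt_delta[OF k])
      finally show ?thesis by simp
    qed
    have "lincomb (M_gc g c) cf ?es = z0" by (rule lincomb_zero) (use esC ce in auto)
    then have "lincomb (M_gc g c) cf ys = z0" using lc lincomb_append[OF ysC esC, of cf] ysC by simp
    then have cy: "\<And>y. y \<in> set ys \<Longrightarrow> cf y = 0" using ind unfolding lin_indep_def by blast
    show "cf x = 0" using x cy ce by auto
  qed
qed

lemma upper:
  assumes g2: "g \<ge> 2" and A: "abelian_subalg (M_gc g c :: ((magma \<Rightarrow> 'k::field_char_0) set set set, 'k) lie_alg) A"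
    and ind: "lin_indep (M_gc g c :: ((magma \<Rightarrow> 'k::field_char_0) set set set, 'k) lie_alg) xs" and xsA: "set xs \<subseteq> A"
  shows "\<exists>zs. lin_indep (M_gc g c :: ((magma \<Rightarrow> 'k::field_char_0) set set set, 'k) lie_alg) zs \<and> length xs + g \<le> length zs"
proof -
  let ?M = "M_gc g c :: ((magma \<Rightarrow> 'k::field_char_0) set set set, 'k) lie_alg"
  interpret vsb ?M by (rule MV)
  note h = homD[OF hMh[where 'k='k]]
  have As: "lsubspace ?M A" and ab: "\<And>x y. x \<in> A \<Longrightarrow> y \<in> A \<Longrightarrow> bk x y = z0"
    using A unfolding abelian_subalg_def by auto
  have AC: "\<And>x. x \<in> A \<Longrightarrow> x \<in> C" using subspace_sub[OF As] by auto
  have hz: "hM (z0 :: (magma \<Rightarrow> 'k) set set set) = (\<lambda>w. 0)" using h(2) by simp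
  have brA: "Tbr (hM x) (hM a) = (\<lambda>w. 0)" if "x \<in> A" "a \<in> A" for x a
    using h(5)[OF AC[OF that(1)] AC[OF that(2)]] ab[OF that] hz by simp
  show ?thesis
  proof (cases "\<forall>a\<in>A. \<forall>k. hM a [k] = (0::'k)")
    case True
    have "lin_indep ?M (xs @ map (eg g c) [0..<g])"
      by (rule ext_gens[OF ind]) (use True xsA in auto)
    then show ?thesis by (intro exI[of _ "xs @ map (eg g c) [0..<g]"]) simp
  next
    case False
    then obtain x i where xA: "x \<in> A" and xi: "hM x [i] \<noteq> (0::'k)" by blast
    have ig: "i < g" using hM_big[OF c3 AC[OF xA], of i] xi by (cases "i < g") auto
    define j where "j = (if i = 0 then 1 else 0::nat)"
    have jg: "j < g" and ji: "j \<noteq> i" using g2 ig unfolding j_def by auto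
    obtain ys where ys: "lin_indep ?M ys" "length xs \<le> length ys + 1" "set ys \<subseteq> A"
       "\<forall>y\<in>set ys. hM y [i] = (0::'k)"
      using elim1[OF ind As xsA, of "\<lambda>a. hM a [i]"] by (auto simp: h(3) h(4))
    have ys0: "hM l [k] = 0" if l: "l \<in> set ys" for l k
    proof -
      have lA: "l \<in> A" using l ys(3) by auto
      have "Tbr (hM x) (hM l) [i, k] = 0" using brA[OF xA lA] by simp
      then have "hM x [i] * hM l [k] = 0" using ys(4) l by simp
      then show ?thesis using xi by simp
    qed
    define y :: "(magma \<Rightarrow> 'k) set set set" where "y = PP g c (delta (Mul (Gen i) (Gen j)))"
    have dC: "(delta (Mul (Gen i) (Gen j)) :: magma \<Rightarrow> 'k) \<in> la_carrier (free_mag g)"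
      by (rule delta_C) (use ig jg in simp)
    have yC: "y \<in> C" unfolding y_def by (rule homD(1)[OF PP_hom dC])
    have hy: "hM y = Tbr (ev (Gen i)) (ev (Gen j))"
      unfolding y_def using hM_PP[OF c3 dC] by (simp add: evl_delta)
    have hy1: "\<And>k. hM y [k] = 0" using hy by simp
    have key: "Tbr (hM x) (hM y) [i, i, j] = 2 * hM x [i]" using hy ji by simp
    have keynz: "Tbr (hM x) (hM y) [i, i, j] \<noteq> 0" using key xi by simp
    have yys: "y \<notin> set ys"
    proof
      assume "y \<in> set ys"
      then have "Tbr (hM x) (hM y) = (\<lambda>w. 0)" using brA[OF xA] ys(3) by auto
      then show False using keynz by simp
    qed
    have ysC: "set ys \<subseteq> C" using ys(3) AC by auto
    have dys: "distinct ys" using ys(1) unfolding lin_indep_def by simp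
    have ind2: "lin_indep ?M (ys @ [y])"
      unfolding lin_indep_def
    proof (intro conjI allI impI ballI)
      show "distinct (ys @ [y])" using dys yys by simp
      show "set (ys @ [y]) \<subseteq> C" using ysC yC by simp
    next
      fix cf l assume lc: "lincomb ?M cf (ys @ [y]) = z0" and l: "l \<in> set (ys @ [y])"
      let ?S = "insert y (set ys)"
      have "hM (lincomb ?M cf (ys @ [y])) = (\<lambda>w. sum_list (map (\<lambda>x. cf x * hM x w) (ys @ [y])))"
        by (rule hom_lincomb[OF MV hMh]) (use ysC yC in auto)
      also have "\<dots> = (\<lambda>w. \<Sum>l\<in>?S. cf l * hM l w)"
        using dys yys by (simp add: sum_list_distinct_conv_sum_set add.commute)
      finally have F: "(\<lambda>w. \<Sum>l\<in>?S. cf l * hM l w) = (\<lambda>w. 0)" using lc hz by simp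
      have "Tbr (hM x) (\<lambda>w. \<Sum>l\<in>?S. cf l * hM l w) = (\<lambda>w. \<Sum>l\<in>?S. cf l * Tbr (hM x) (hM l) w)"
        by (simp add: Tbr_sum_r Tbr_scale_r)
      then have "(\<lambda>w. \<Sum>l\<in>?S. cf l * Tbr (hM x) (hM l) w) = (\<lambda>w. 0)"
        using F by (simp add: Tbr_zero_r)
      then have "(\<Sum>l\<in>?S. cf l * Tbr (hM x) (hM l) [i, i, j]) = 0" by (metis (mono_tags))
      moreover have "(\<Sum>l\<in>set ys. cf l * Tbr (hM x) (hM l) [i, i, j]) = 0"
      proof (rule sum.neutral, rule ballI)
        fix l assume "l \<in> set ys"
        then have "Tbr (hM x) (hM l) = (\<lambda>w. 0)" using brA[OF xA] ys(3) by auto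
        then show "cf l * Tbr (hM x) (hM l) [i, i, j] = 0" by (simp only: mult_zero_right)
      qed
      ultimately have "cf y * Tbr (hM x) (hM y) [i, i, j] = 0" using yys by simp
      then have cy: "cf y = 0" using keynz by simp
      have "lincomb ?M cf (ys @ [y]) = ad (lincomb ?M cf ys) (lincomb ?M cf [y])"
        by (rule lincomb_append) (use ysC yC in auto)
      then have "lincomb ?M cf ys = z0" using lc cy yC ysC by simp
      then have "\<forall>l\<in>set ys. cf l = 0" using ys(1) unfolding lin_indep_def by blast
      then show "cf l = 0" using l cy by auto
    qed
    have "lin_indep ?M ((ys @ [y]) @ map (eg g c) [0..<g])"
      by (rule ext_gens[OF ind2]) (use ys0 hy1 in auto)
    then show ?thesis using ys(2) by (intro exI[of _ "(ys @ [y]) @ map (eg g c) [0..<g]"]) simp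
  qed
qed

lemma W_subspace:
  "lsubspace (M_gc g c :: ((magma \<Rightarrow> 'k::field) set set set, 'k) lie_alg)
     {x \<in> la_carrier (M_gc g c). \<forall>k. P k \<longrightarrow> hM x [k] = (0::'k)}"
proof -
  let ?M = "M_gc g c :: ((magma \<Rightarrow> 'k::field) set set set, 'k) lie_alg"
  interpret vsb ?M by (rule MV)
  note h = homD[OF hMh[where 'k='k]]
  show ?thesis unfolding lsubspace_def using h(2) by (auto simp: h(3) h(4))
qed

lemma S0_abelian:
  "abelian_subalg (M_gc g c :: ((magma \<Rightarrow> 'k::field) set set set, 'k) lie_alg)
     {x \<in> la_carrier (M_gc g c). \<forall>k. hM x [k] = (0::'k)}"
  unfolding abelian_subalg_def
proof (intro conjI ballI)
  show "lsubspace (M_gc g c :: ((magma \<Rightarrow> 'k::field) set set set, 'k) lie_alg)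
     {x \<in> la_carrier (M_gc g c). \<forall>k. hM x [k] = (0::'k)}"
    using W_subspace[of "\<lambda>k. True", where 'k='k] by simp
next
  fix x y assume "x \<in> {x \<in> la_carrier (M_gc g c :: ((magma \<Rightarrow> 'k::field) set set set, 'k) lie_alg). \<forall>k. hM x [k] = (0::'k)}"
    "y \<in> {x \<in> la_carrier (M_gc g c :: ((magma \<Rightarrow> 'k::field) set set set, 'k) lie_alg). \<forall>k. hM x [k] = (0::'k)}"
  then show "la_brk (M_gc g c) x y = la_zero (M_gc g c :: ((magma \<Rightarrow> 'k::field) set set set, 'k) lie_alg)"
    using M_abelian[OF c3] by auto
qed

lemma lower_iter:
  assumes ind: "lin_indep (M_gc g c :: ((magma \<Rightarrow> 'k::field) set set set, 'k) lie_alg) xs"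
  shows "\<exists>ys. lin_indep (M_gc g c :: ((magma \<Rightarrow> 'k::field) set set set, 'k) lie_alg) ys \<and>
     set ys \<subseteq> {x \<in> la_carrier (M_gc g c). \<forall>k. k < m \<longrightarrow> hM x [k] = (0::'k)} \<and> length xs \<le> length ys + m"
proof (induction m)
  case 0
  then show ?case using ind unfolding lin_indep_def by (intro exI[of _ xs]) auto
next
  case (Suc m)
  let ?M = "M_gc g c :: ((magma \<Rightarrow> 'k::field) set set set, 'k) lie_alg"
  interpret vsb ?M by (rule MV)
  note h = homD[OF hMh[where 'k='k]]
  obtain ys where ys: "lin_indep ?M ys" "set ys \<subseteq> {x \<in> C. \<forall>k. k < m \<longrightarrow> hM x [k] = (0::'k)}"
    "length xs \<le> length ys + m" using Suc.IH by blast
  obtain zs where zs: "lin_indep ?M zs" "length ys \<le> length zs + 1"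
    "set zs \<subseteq> {x \<in> C. \<forall>k. k < m \<longrightarrow> hM x [k] = (0::'k)}" "\<forall>z\<in>set zs. hM z [m] = (0::'k)"
    using elim1[OF ys(1) W_subspace ys(2), of "\<lambda>a. hM a [m]"] by (auto simp: h(3) h(4))
  have "set zs \<subseteq> {x \<in> C. \<forall>k. k < Suc m \<longrightarrow> hM x [k] = (0::'k)}"
  proof
    fix z assume z: "z \<in> set zs"
    then have "z \<in> C" "\<forall>k. k < m \<longrightarrow> hM z [k] = 0" "hM z [m] = 0" using zs(3,4) by auto
    then show "z \<in> {x \<in> C. \<forall>k. k < Suc m \<longrightarrow> hM x [k] = (0::'k)}" using less_Suc_eq by auto
  qed
  then show ?case using zs(1,2) ys(3) by (intro exI[of _ zs]) auto
qed

lemma lower: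
  assumes ind: "lin_indep (M_gc g c :: ((magma \<Rightarrow> 'k::field) set set set, 'k) lie_alg) xs"
  shows "\<exists>ys. lin_indep (M_gc g c :: ((magma \<Rightarrow> 'k::field) set set set, 'k) lie_alg) ys \<and>
     set ys \<subseteq> {x \<in> la_carrier (M_gc g c). \<forall>k. hM x [k] = (0::'k)} \<and> length xs \<le> length ys + g"
proof -
  obtain ys where ys: "lin_indep (M_gc g c :: ((magma \<Rightarrow> 'k::field) set set set, 'k) lie_alg) ys"
     "set ys \<subseteq> {x \<in> la_carrier (M_gc g c). \<forall>k. k < g \<longrightarrow> hM x [k] = (0::'k)}" "length xs \<le> length ys + g"
    using lower_iter[OF ind, of g] by blast
  have "set ys \<subseteq> {x \<in> la_carrier (M_gc g c). \<forall>k. hM x [k] = (0::'k)}"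
  proof
    fix y assume y: "y \<in> set ys"
    then have yC: "y \<in> la_carrier (M_gc g c :: ((magma \<Rightarrow> 'k::field) set set set, 'k) lie_alg)"
      and yk: "\<forall>k. k < g \<longrightarrow> hM y [k] = (0::'k)" using ys(2) by auto
    have "hM y [k] = (0::'k)" for k
      using yk hM_big[OF c3 yC, of k] by (cases "k < g") auto
    then show "y \<in> {x \<in> la_carrier (M_gc g c). \<forall>k. hM x [k] = (0::'k)}" using yC by simp
  qed
  then show ?thesis using ys(1,3) by blast
qed

end

lemma enat_aux1: "enat n + enat g \<le> D \<Longrightarrow> enat n \<le> D - enat g"
  by (cases D) auto

lemma enat_aux2: "D \<le> E + enat g \<Longrightarrow> D - enat g \<le> E"
  by (cases D; cases E) auto

theorem corollary5p3:
  fixes g c :: nat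
  assumes "g \<ge> 3" and "c \<ge> 3"
  shows "alpha (M_gc g c :: (_, 'k::field_char_0) lie_alg)
           = ldim (M_gc g c :: (_, 'k) lie_alg) (la_carrier (M_gc g c :: (_, 'k) lie_alg)) - enat g"
proof -
  let ?M = "M_gc g c :: ((magma \<Rightarrow> 'k) set set set, 'k) lie_alg"
  let ?D = "ldim ?M (la_carrier ?M)"
  let ?S0 = "{x \<in> la_carrier ?M. \<forall>k. hM x [k] = (0::'k)}"
  have g2: "g \<ge> 2" using assms(1) by simp
  have up: "alpha ?M \<le> ?D - enat g"
    unfolding alpha_def
  proof (rule Sup_least)
    fix d assume "d \<in> {ldim ?M S |S. abelian_subalg ?M S}"
    then obtain S where S: "abelian_subalg ?M S" "d = ldim ?M S" by auto
    show "d \<le> ?D - enat g" unfolding S(2) ldim_def[of ?M S]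
    proof (rule Sup_least)
      fix e assume "e \<in> {enat (length xs) |xs. lin_indep ?M xs \<and> set xs \<subseteq> S}"
      then obtain xs where xs: "e = enat (length xs)" "lin_indep ?M xs" "set xs \<subseteq> S" by auto
      obtain zs where zs: "lin_indep ?M zs" "length xs + g \<le> length zs"
        using upper[OF assms(2) g2 S(1) xs(2,3)] by blast
      have "set zs \<subseteq> la_carrier ?M" using zs(1) unfolding lin_indep_def by simp
      then have mem: "enat (length zs) \<in> {enat (length xs) |xs. lin_indep ?M xs \<and> set xs \<subseteq> la_carrier ?M}"
        using zs(1) by (intro CollectI exI[of _ zs]) simp
      have "enat (length zs) \<le> ?D" unfolding ldim_def[of ?M "la_carrier ?M"] by (rule Sup_upper[OF mem])
      moreover have "enat (length xs) + enat g \<le> enat (length zs)" using zs(2) by simp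
      ultimately have "enat (length xs) + enat g \<le> ?D" by (rule order_trans[rotated])
      then show "e \<le> ?D - enat g" unfolding xs(1) by (rule enat_aux1)
    qed
  qed
  have "?D \<le> ldim ?M ?S0 + enat g"
    unfolding ldim_def[of ?M "la_carrier ?M"]
  proof (rule Sup_least)
    fix e assume "e \<in> {enat (length xs) |xs. lin_indep ?M xs \<and> set xs \<subseteq> la_carrier ?M}"
    then obtain xs where xs: "e = enat (length xs)" "lin_indep ?M xs" by auto
    obtain ys where ys: "lin_indep ?M ys" "set ys \<subseteq> ?S0" "length xs \<le> length ys + g"
      using lower[OF assms(2) xs(2)] by blast
    have mem: "enat (length ys) \<in> {enat (length xs) |xs. lin_indep ?M xs \<and> set xs \<subseteq> ?S0}"
      using ys(1,2) by (intro CollectI exI[of _ ys]) simp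
    have "enat (length ys) \<le> ldim ?M ?S0" unfolding ldim_def[of ?M ?S0] by (rule Sup_upper[OF mem])
    then have "enat (length ys) + enat g \<le> ldim ?M ?S0 + enat g" by (rule add_right_mono)
    moreover have "enat (length xs) \<le> enat (length ys) + enat g" using ys(3) by simp
    ultimately show "e \<le> ldim ?M ?S0 + enat g" unfolding xs(1) by (rule order_trans[rotated])
  qed
  then have "?D - enat g \<le> ldim ?M ?S0" by (rule enat_aux2)
  also have "ldim ?M ?S0 \<le> alpha ?M"
  proof -
    have mem: "ldim ?M ?S0 \<in> {ldim ?M S |S. abelian_subalg ?M S}"
      using S0_abelian[OF assms(2), where 'k='k] by (intro CollectI exI[of _ ?S0]) simp
    show ?thesis unfolding alpha_def by (rule Sup_upper[OF mem])
  qed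
  finally show ?thesis using up by (rule antisym[rotated])
qed

end
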